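(* Let $c>0$ and let $F$ be defined by $$F(\theta)=\frac{\int_{0}^{\theta}\int_{0}^{\theta}e^{c\cos(a-b)}\,da\,db}{2\pi\int_{0}^{2\pi}e^{c\cos a}\,da}-\Big(\frac{\theta}{2\pi}\Big)^{2}.$$ Let $\theta_1,\theta_2,\theta_3\ge0$ with $\theta_1+\theta_2+\theta_3=2\pi$ and $\theta_i\le\pi$ for all $1\le i\le3$. Then $$-3F(2\pi/3)+\sum_{i=1}^3F(\theta_i)\le 0.158\Big(-1+\Big(1-\frac{3^{4/3}}{5}\Big)e^{-c\pi/2}+\frac{3^{4/3}}{5}e^{-c\pi/6}\Big)\sum_{i=1}^3\Big(\frac{\theta_i}{2\pi}-\frac13\Big)^2.$$
   Context: In the paper $c=\rho rs/(1-\rho^2)$ with $0<\rho<1$, $r,s>0$. *)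

theory Defs
  imports "HOL-Analysis.Analysis"
begin

definition F :: "real \<Rightarrow> real \<Rightarrow> real" where
  "F c \<theta> =
     integral {0..\<theta>} (\<lambda>b. integral {0..\<theta>} (\<lambda>a. exp (c * cos (a - b))))
       / (2 * pi * integral {0..2*pi} (\<lambda>a. exp (c * cos a)))
     - (\<theta> / (2 * pi))^2"

end

theory Submission
  imports Defs
begin

definition gg :: "real \<Rightarrow> real \<Rightarrow> real" where "gg c t = exp (c * cos t)"
definition PP :: "real \<Rightarrow> real \<Rightarrow> real" where "PP c x = integral {-4..x} (gg c)"
definition QQ :: "real \<Rightarrow> real \<Rightarrow> real" where "QQ c x = integral {-4..x} (PP c)"
definition Qn :: "real \<Rightarrow> real \<Rightarrow> real" where "Qn c x = QQ c x - QQ c 0 - PP c 0 * x"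
definition JJ :: "real \<Rightarrow> real" where "JJ c = PP c pi - PP c 0"

lemma gg_cont: "continuous_on S (gg c)" unfolding gg_def by (intro continuous_intros)

lemma gg_pos: "gg c t > 0" unfolding gg_def by simp

lemma gg_deriv: "(gg c has_real_derivative (- c * sin t * gg c t)) (at t)"
  unfolding gg_def by (auto intro!: derivative_eq_intros)

lemma PP_deriv: assumes "x > -4" shows "(PP c has_real_derivative gg c x) (at x)"
proof -
  have "(PP c has_real_derivative gg c x) (at x within {-4..x+1})"
    unfolding PP_def by (rule integral_has_real_derivative) (use assms gg_cont in auto)
  moreover have "at x within {-4..x+1} = at x" 
    by (rule at_within_interior) (use assms in simp)
  ultimately show ?thesis by simp
qed

lemma PP_cont: "continuous_on {-4..b} (PP c)"
  unfolding PP_def by (rule indefinite_integral_continuous_1) (rule integrable_continuous_real, rule gg_cont)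

lemma QQ_deriv: assumes "x > -4" shows "(QQ c has_real_derivative PP c x) (at x)"
proof -
  have "(QQ c has_real_derivative PP c x) (at x within {-4..x+1})"
    unfolding QQ_def by (rule integral_has_real_derivative) (use assms PP_cont in auto)
  moreover have "at x within {-4..x+1} = at x" 
    by (rule at_within_interior) (use assms in simp)
  ultimately show ?thesis by simp
qed

lemma PP_comp:
  assumes "(h has_real_derivative h') (at x)" "h x > -4"
  shows "((\<lambda>y. PP c (h y)) has_real_derivative gg c (h x) * h') (at x)"
  using DERIV_chain2[OF PP_deriv[OF assms(2)] assms(1)] .

lemma QQ_comp:
  assumes "(h has_real_derivative h') (at x)" "h x > -4"
  shows "((\<lambda>y. QQ c (h y)) has_real_derivative PP c (h x) * h') (at x)"
  using DERIV_chain2[OF QQ_deriv[OF assms(2)] assms(1)] .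

lemma ftc_real:
  fixes f f' :: "real \<Rightarrow> real"
  assumes "a \<le> b" "\<And>x. x \<in> {a..b} \<Longrightarrow> (f has_real_derivative f' x) (at x)"
  shows "(f' has_integral (f b - f a)) {a..b}"
  by (rule fundamental_theorem_of_calculus)
     (use assms in \<open>auto simp: has_real_derivative_iff_has_vector_derivative[symmetric] intro: has_field_derivative_at_within\<close>)

lemma zero_deriv_const:
  fixes f :: "real \<Rightarrow> real"
  assumes "a \<le> b" "\<And>x. x \<in> {a..b} \<Longrightarrow> (f has_real_derivative 0) (at x)"
  shows "f b = f a"
proof -
  have "((\<lambda>x. 0) has_integral (f b - f a)) {a..b}" by (rule ftc_real) (use assms in auto)
  hence "f b - f a = 0" using has_integral_unique has_integral_0 by blast
  thus ?thesis by simp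
qed

lemma PP_even: assumes "0 \<le> b" "b < 4" shows "PP c (-b) = 2 * PP c 0 - PP c b"
proof -
  have "(\<lambda>x. PP c (-x) + PP c x) b = (\<lambda>x. PP c (-x) + PP c x) 0"
  proof (rule zero_deriv_const[where f="\<lambda>x. PP c (-x) + PP c x"])
    fix x assume x: "x \<in> {0..b}"
    have d1: "((\<lambda>x. PP c (-x)) has_real_derivative (gg c (-x) * (-1))) (at x)"
      by (rule PP_comp) (use x assms in \<open>auto intro!: derivative_eq_intros\<close>)
    have "((\<lambda>x. PP c (-x) + PP c x) has_real_derivative (gg c (-x) * (-1) + gg c x)) (at x)"
      by (intro DERIV_add d1 PP_deriv) (use x in auto)
    thus "((\<lambda>x. PP c (-x) + PP c x) has_real_derivative 0) (at x)"
      by (simp add: gg_def)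
  qed (use assms in auto)
  thus ?thesis by simp
qed

lemma PP_2pi: "PP c (2*pi) = 2 * PP c pi - PP c 0"
proof -
  have "(\<lambda>x. PP c (pi + x) + PP c (pi - x)) pi = (\<lambda>x. PP c (pi + x) + PP c (pi - x)) 0"
  proof (rule zero_deriv_const[where f="\<lambda>x. PP c (pi + x) + PP c (pi - x)"])
    fix x assume x: "x \<in> {0..pi}"
    have d1: "((\<lambda>x. PP c (pi + x)) has_real_derivative (gg c (pi + x) * 1)) (at x)"
      by (rule PP_comp) (use x pi_gt3 in \<open>auto intro!: derivative_eq_intros\<close>)
    have d2: "((\<lambda>x. PP c (pi - x)) has_real_derivative (gg c (pi - x) * (-1))) (at x)"
      by (rule PP_comp) (use x pi_gt3 in \<open>auto intro!: derivative_eq_intros\<close>)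
    have "((\<lambda>x. PP c (pi + x) + PP c (pi - x)) has_real_derivative (gg c (pi + x) * 1 + gg c (pi - x) * (-1))) (at x)"
      by (intro DERIV_add d1 d2)
    thus "((\<lambda>x. PP c (pi + x) + PP c (pi - x)) has_real_derivative 0) (at x)"
      by (simp add: gg_def cos_add cos_diff)
  qed (use pi_gt3 in auto)
  thus ?thesis by simp
qed

lemma Z_eq: "integral {0..2*pi} (\<lambda>a. exp (c * cos a)) = 2 * JJ c"
proof -
  have "((gg c) has_integral (PP c (2*pi) - PP c 0)) {0..2*pi}"
    by (rule ftc_real) (auto intro!: PP_deriv)
  hence "integral {0..2*pi} (gg c) = PP c (2*pi) - PP c 0" by (rule integral_unique)
  thus ?thesis unfolding JJ_def PP_2pi by (simp add: gg_def[abs_def])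
qed

lemma double_eq:
  assumes "0 \<le> th" "th < 4"
  shows "integral {0..th} (\<lambda>b. integral {0..th} (\<lambda>a. exp (c * cos (a - b)))) = 2 * Qn c th"
proof -
  have inner: "integral {0..th} (\<lambda>a. exp (c * cos (a - b))) = PP c (th - b) + PP c b - 2 * PP c 0"
    if b: "b \<in> {0..th}" for b
  proof -
    have "((\<lambda>a. gg c (a - b)) has_integral (PP c (th - b) - PP c (0 - b))) {0..th}"
    proof (rule ftc_real[where f="\<lambda>a. PP c (a - b)"])
      fix x assume x: "x \<in> {0..th}"
      have dd: "((\<lambda>a. a - b) has_real_derivative 1) (at x)"
        using DERIV_diff[OF DERIV_ident DERIV_const, of b x] by simp
      show "((\<lambda>a. PP c (a - b)) has_real_derivative gg c (x - b)) (at x)"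
        using PP_comp[OF dd, of c] x b assms by simp
    qed (use assms in auto)
    hence "integral {0..th} (\<lambda>a. exp (c * cos (a - b))) = PP c (th - b) - PP c (- b)"
      by (auto simp: gg_def[abs_def] dest: integral_unique)
    thus ?thesis using PP_even[of b c] b assms by simp
  qed
  have "integral {0..th} (\<lambda>b. integral {0..th} (\<lambda>a. exp (c * cos (a - b))))
      = integral {0..th} (\<lambda>b. PP c (th - b) + PP c b - 2 * PP c 0)"
    by (rule integral_cong) (use inner in auto)
  also have "\<dots> = (- QQ c (th - th) + QQ c th - 2 * PP c 0 * th) - (- QQ c (th - 0) + QQ c 0 - 2 * PP c 0 * 0)"
  proof (rule integral_unique, rule ftc_real[where f="\<lambda>b. - QQ c (th - b) + QQ c b - 2 * PP c 0 * b"])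
    fix x assume x: "x \<in> {0..th}"
    have d1: "((\<lambda>b. QQ c (th - b)) has_real_derivative PP c (th - x) * (-1)) (at x)"
    proof -
      have dd: "((\<lambda>b. th - b) has_real_derivative -1) (at x)"
        using DERIV_diff[OF DERIV_const DERIV_ident, of th x] by simp
      show ?thesis using QQ_comp[OF dd, of c] x assms by simp
    qed
    have d2: "(QQ c has_real_derivative PP c x) (at x)" using QQ_deriv x by auto
    have "((\<lambda>b. - QQ c (th - b) + QQ c b - 2 * PP c 0 * b) has_real_derivative
        (- (PP c (th - x) * (-1)) + PP c x - 2 * PP c 0 * 1)) (at x)"
      by (intro DERIV_diff DERIV_add DERIV_minus d1 d2 DERIV_cmult DERIV_ident)
    thus "((\<lambda>b. - QQ c (th - b) + QQ c b - 2 * PP c 0 * b) has_real_derivative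
        PP c (th - x) + PP c x - 2 * PP c 0) (at x)" by simp
  qed (use assms in auto)
  also have "\<dots> = 2 * Qn c th" unfolding Qn_def by simp
  finally show ?thesis .
qed

lemma F_eq:
  assumes "0 \<le> th" "th < 4"
  shows "F c th = Qn c th / (2 * pi * JJ c) - (th / (2*pi))^2"
  unfolding F_def double_eq[OF assms] Z_eq by simp

lemma lin_deriv: "((\<lambda>s. x + s * d) has_real_derivative d) (at s)"
  using DERIV_add[OF DERIV_const DERIV_cmult_right[OF DERIV_ident, of d], of x s] by simp

lemma taylor_QQ:
  assumes "x > -4" "x + d > -4"
  shows "QQ c (x + d) = QQ c x + d * PP c x + integral {0..1} (\<lambda>s. (1-s) * d^2 * gg c (x + s*d))"
proof -
  have pos: "x + s * d > -4" if "s \<in> {0..1}" for s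
  proof -
    have "x + s * d = (1 - s) * x + s * (x + d)" by algebra
    also have "\<dots> > (1-s) * (-4) + s * (-4)"
    proof (cases "s = 0")
      case True thus ?thesis using assms by simp
    next
      case False
      hence "s > 0" using that by auto
      have "(1-s) * x \<ge> (1-s) * (-4)" using that assms by (intro mult_left_mono) auto
      moreover have "s * (x + d) > s * (-4)" using \<open>s > 0\<close> assms by (intro mult_strict_left_mono) auto
      ultimately show ?thesis by linarith
    qed
    finally show ?thesis by simp
  qed
  have "((\<lambda>s. (1-s) * d^2 * gg c (x + s*d)) has_integral
        ((\<lambda>s. QQ c (x + s*d) + (1-s) * d * PP c (x + s*d)) 1 - (\<lambda>s. QQ c (x + s*d) + (1-s) * d * PP c (x + s*d)) 0)) {0..1}"
  proof (rule ftc_real)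
    fix s :: real assume s: "s \<in> {0..1}"
    have d1: "((\<lambda>s. QQ c (x + s*d)) has_real_derivative PP c (x + s*d) * d) (at s)"
      using QQ_comp[OF lin_deriv[where x=x and d=d and s=s], of c] pos[OF s] by simp
    have d2: "((\<lambda>s. PP c (x + s*d)) has_real_derivative gg c (x + s*d) * d) (at s)"
      using PP_comp[OF lin_deriv[where x=x and d=d and s=s], of c] pos[OF s] by simp
    have d3: "((\<lambda>s. (1-s) * d) has_real_derivative (-1) * d) (at s)"
      by (auto intro!: derivative_eq_intros)
    show "((\<lambda>s. QQ c (x + s*d) + (1-s) * d * PP c (x + s*d)) has_real_derivative
           (1-s) * d^2 * gg c (x + s*d)) (at s)"
      by (rule DERIV_cong[OF DERIV_add[OF d1 DERIV_mult[OF d3 d2]]]) (simp add: power2_eq_square algebra_simps)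
  qed simp
  hence "integral {0..1} (\<lambda>s. (1-s) * d^2 * gg c (x + s*d)) = QQ c (x + d) - (QQ c x + d * PP c x)"
    by (simp add: integral_unique)
  thus ?thesis by simp
qed

definition t0 :: real where "t0 = 2*pi/3"
definition remL :: "real \<Rightarrow> real \<Rightarrow> real \<Rightarrow> real" where
  "remL c lam d = integral {0..1} (\<lambda>s. (1-s) * (gg c (t0 + s*d) - lam))"
definition phi :: "real \<Rightarrow> real \<Rightarrow> real \<Rightarrow> real" where
  "phi c lam th = Qn c th - Qn c t0 - (PP c t0 - PP c 0) * (th - t0) - lam * (th - t0)^2 / 2"

lemma t0_bounds: "2 < t0" "t0 < 3" "t0 < pi" using pi_gt3 pi_less_4 unfolding t0_def by auto

lemma gg_mono: assumes "c \<ge> 0" "cos x \<le> cos y" shows "gg c x \<le> gg c y"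
  unfolding gg_def using assms by (simp add: mult_left_mono)

lemma gg_cos_mono: assumes "c \<ge> 0" "0 \<le> y" "y \<le> x" "x \<le> pi" shows "gg c x \<le> gg c y"
  by (rule gg_mono) (use assms in \<open>auto simp: cos_mono_le_eq\<close>)

lemma int_1ms: "((\<lambda>s::real. 1 - s) has_integral 1/2) {0..1}"
proof -
  have "((\<lambda>s::real. 1 - s) has_integral ((\<lambda>s. s - s^2/2) 1 - (\<lambda>s. s - s^2/2) 0)) {0..1}"
    by (rule ftc_real) (auto intro!: derivative_eq_intros)
  thus ?thesis by simp
qed

lemma remL_int: "((\<lambda>s. (1-s) * (gg c (t0 + s*d) - lam)) has_integral remL c lam d) {0..1}"
  unfolding remL_def
  by (rule integrable_integral, rule integrable_continuous_real) (auto simp: gg_def intro!: continuous_intros)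

lemma phi_rep:
  assumes "t0 + d > -4"
  shows "phi c lam (t0 + d) = d^2 * remL c lam d"
proof -
  define A where "A = integral {0..1} (\<lambda>s. (1-s) * gg c (t0 + s*d))"
  define B where "B = integral {0..1} (\<lambda>s. (1-s) * d^2 * gg c (t0 + s*d))"
  have T: "QQ c (t0 + d) = QQ c t0 + d * PP c t0 + B"
    unfolding B_def by (rule taylor_QQ) (use assms t0_bounds in auto)
  have i1: "((\<lambda>s. (1-s) * gg c (t0 + s*d)) has_integral A) {0..1}"
    unfolding A_def
    by (rule integrable_integral, rule integrable_continuous_real) (auto simp: gg_def intro!: continuous_intros)
  have i2: "((\<lambda>s. (1-s) * d^2 * gg c (t0 + s*d)) has_integral d^2 * A) {0..1}"
    using has_integral_mult_right[OF i1, of "d^2"] by (simp add: mult.assoc mult.left_commute)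
  have i3: "((\<lambda>s. (1-s) * (gg c (t0 + s*d) - lam)) has_integral (A - lam * (1/2))) {0..1}"
    using has_integral_diff[OF i1 has_integral_mult_right[OF int_1ms, of lam]] by (simp add: right_diff_distrib mult.commute)
  have R: "remL c lam d = A - lam/2"
    using integral_unique[OF i3] unfolding remL_def by simp
  have B: "B = d^2 * A"
    using integral_unique[OF i2] unfolding B_def .
  show ?thesis unfolding phi_def Qn_def T B R by (simp add: algebra_simps power2_eq_square)
qed

lemma caseB_pointwise:
  assumes c: "c \<ge> 0"
    and hE: "\<And>u. 0 \<le> u \<Longrightarrow> u \<le> pi/3 \<Longrightarrow> gg c (t0 - u) + gg c (t0 + u) \<le> 2*lam"
    and d: "d1 \<ge> 0" "d2 \<ge> 0" "d1 + d2 \<le> pi/3" and s: "0 \<le> s" "s \<le> 1"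
  shows "d1^2 * (gg c (t0 + s*(-d1)) - lam) + d2^2 * (gg c (t0 + s*(-d2)) - lam)
         + (d1+d2)^2 * (gg c (t0 + s*(d1+d2)) - lam) \<le> 0"
proof -
  define u where "u = s * (d1 + d2)"
  have u: "0 \<le> u" "u \<le> pi/3"
  proof -
    show "0 \<le> u" unfolding u_def using s d by simp
    have "s * (d1+d2) \<le> 1 * (d1+d2)" using s d by (intro mult_right_mono) auto
    thus "u \<le> pi/3" unfolding u_def using d by simp
  qed
  define a where "a = gg c (t0 - u) - lam"
  define b where "b = gg c (t0 + u) - lam"
  have ab: "a + b \<le> 0" using hE[OF u] unfolding a_def b_def by simp
  have g0: "gg c t0 \<le> lam" using hE[of 0] by simp
  have b0: "b \<le> 0"
  proof -
    have "gg c (t0 + u) \<le> gg c t0" by (rule gg_cos_mono) (use c u t0_bounds in \<open>auto simp: t0_def\<close>)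
    thus ?thesis using g0 unfolding b_def by simp
  qed
  have X: "gg c (t0 + s*(-di)) - lam \<le> a" if di: "0 \<le> di" "di \<le> d1 + d2" for di
  proof -
    have "s * di \<le> u" unfolding u_def using s di by (intro mult_left_mono) auto
    moreover have "0 \<le> s * di" using s di by simp
    ultimately have "gg c (t0 - s*di) \<le> gg c (t0 - u)"
      by (intro gg_cos_mono) (use c u t0_bounds in \<open>auto simp: t0_def\<close>)
    thus ?thesis unfolding a_def by simp
  qed
  have X1: "d1^2 * (gg c (t0 + s*(-d1)) - lam) \<le> d1^2 * a" using X[of d1] d by (intro mult_left_mono) auto
  have X2: "d2^2 * (gg c (t0 + s*(-d2)) - lam) \<le> d2^2 * a" using X[of d2] d by (intro mult_left_mono) auto
  have X3: "gg c (t0 + s*(d1+d2)) - lam = b" unfolding b_def u_def ..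
  have "d1^2 * a + d2^2 * a + (d1+d2)^2 * b \<le> 0"
  proof (cases "a \<ge> 0")
    case True
    have "d1^2 + d2^2 \<le> (d1+d2)^2" using d by (simp add: power2_eq_square algebra_simps)
    hence "(d1^2 + d2^2) * a \<le> (d1+d2)^2 * a" using True by (intro mult_right_mono) auto
    moreover have "(d1+d2)^2 * (a + b) \<le> 0" using ab by (simp add: mult_nonneg_nonpos)
    ultimately show ?thesis by (simp add: algebra_simps)
  next
    case False
    have "d1^2 * a \<le> 0" "d2^2 * a \<le> 0" using False by (auto simp: mult_nonneg_nonpos)
    moreover have "(d1+d2)^2 * b \<le> 0" using b0 by (simp add: mult_nonneg_nonpos)
    ultimately show ?thesis by simp
  qed
  thus ?thesis using X1 X2 X3 by simp
qed

lemma caseB: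
  assumes c: "c \<ge> 0"
    and hE: "\<And>u. 0 \<le> u \<Longrightarrow> u \<le> pi/3 \<Longrightarrow> gg c (t0 - u) + gg c (t0 + u) \<le> 2*lam"
    and d: "d1 \<ge> 0" "d2 \<ge> 0" "d1 + d2 \<le> pi/3"
  shows "d1^2 * remL c lam (-d1) + d2^2 * remL c lam (-d2) + (d1+d2)^2 * remL c lam (d1+d2) \<le> 0"
proof -
  let ?f = "\<lambda>d (s::real). (1-s) * (gg c (t0 + s*d) - lam)"
  have I: "((\<lambda>s. d1^2 * ?f (-d1) s + d2^2 * ?f (-d2) s + (d1+d2)^2 * ?f (d1+d2) s) has_integral
      (d1^2 * remL c lam (-d1) + d2^2 * remL c lam (-d2) + (d1+d2)^2 * remL c lam (d1+d2))) {0..1}"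
    by (intro has_integral_add has_integral_mult_right remL_int)
  have "d1^2 * remL c lam (-d1) + d2^2 * remL c lam (-d2) + (d1+d2)^2 * remL c lam (d1+d2) \<le> 0"
  proof (rule has_integral_le[OF I has_integral_0])
    fix s :: real assume s: "s \<in> {0..1}"
    have "(1-s) * (d1^2 * (gg c (t0 + s*(-d1)) - lam) + d2^2 * (gg c (t0 + s*(-d2)) - lam)
         + (d1+d2)^2 * (gg c (t0 + s*(d1+d2)) - lam)) \<le> 0"
      using caseB_pointwise[OF c hE d, of s] s by (intro mult_nonneg_nonpos) auto
    thus "d1^2 * ?f (-d1) s + d2^2 * ?f (-d2) s + (d1+d2)^2 * ?f (d1+d2) s \<le> 0"
      by (simp add: algebra_simps)
  qed
  thus ?thesis .
qed

lemma Qn_deriv: assumes "x > -4" shows "(Qn c has_real_derivative (PP c x - PP c 0)) (at x)"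
proof -
  have "((\<lambda>x. QQ c x - QQ c 0 - PP c 0 * x) has_real_derivative (PP c x - 0 - PP c 0 * 1)) (at x)"
    by (intro DERIV_diff QQ_deriv assms DERIV_const DERIV_cmult DERIV_ident)
  thus ?thesis unfolding Qn_def[abs_def] by simp
qed

lemma phi_deriv: assumes "x > -4"
  shows "(phi c lam has_real_derivative (PP c x - PP c t0 - lam * (x - t0))) (at x)"
proof -
  have d1: "((\<lambda>x. lam * (x - t0)^2 / 2) has_real_derivative lam * (x - t0)) (at x)"
    by (auto intro!: derivative_eq_intros)
  have d2: "((\<lambda>x. (PP c t0 - PP c 0) * (x - t0)) has_real_derivative (PP c t0 - PP c 0)) (at x)"
    by (auto intro!: derivative_eq_intros)
  have "((\<lambda>x. Qn c x - Qn c t0 - (PP c t0 - PP c 0) * (x - t0) - lam * (x - t0)^2 / 2) has_real_derivative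
        ((PP c x - PP c 0) - 0 - (PP c t0 - PP c 0) - lam * (x - t0))) (at x)"
    by (intro DERIV_diff Qn_deriv assms DERIV_const d1 d2)
  thus ?thesis unfolding phi_def[abs_def] by simp
qed

lemma phi_concave:
  assumes c: "c \<ge> 0" and g0: "gg c t0 \<le> lam"
  shows "convex_on {t0..pi} (\<lambda>x. - phi c lam x)"
proof (rule convex_on_realI[where f' = "\<lambda>x. - (PP c x - PP c t0 - lam * (x - t0))"])
  show "connected {t0..pi}" by simp
  fix x assume "x \<in> {t0..pi}"
  hence "x > -4" using t0_bounds by auto
  thus "((\<lambda>x. - phi c lam x) has_real_derivative - (PP c x - PP c t0 - lam * (x - t0))) (at x)"
    by (intro DERIV_minus phi_deriv)
next
  fix x y assume xy: "x \<in> {t0..pi}" "y \<in> {t0..pi}" "x \<le> y"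
  have "(\<lambda>t. lam * t - PP c t) x \<le> (\<lambda>t. lam * t - PP c t) y"
  proof (rule DERIV_nonneg_imp_nondecreasing[OF xy(3)])
    fix t assume t: "x \<le> t" "t \<le> y"
    have "t > -4" using t xy t0_bounds by auto
    hence "((\<lambda>t. lam * t - PP c t) has_real_derivative (lam * 1 - gg c t)) (at t)"
      by (intro DERIV_diff DERIV_cmult DERIV_ident PP_deriv)
    moreover have "gg c t \<le> gg c t0"
      by (rule gg_cos_mono) (use c t xy t0_bounds in auto)
    ultimately show "\<exists>y. ((\<lambda>t. lam * t - PP c t) has_real_derivative y) (at t) \<and> 0 \<le> y"
      using g0 by force
  qed
  thus "- (PP c x - PP c t0 - lam * (x - t0)) \<le> - (PP c y - PP c t0 - lam * (y - t0))"
    by (simp add: algebra_simps)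
qed

lemma phi_mid:
  assumes c: "c \<ge> 0" and g0: "gg c t0 \<le> lam" and ab: "a \<in> {t0..pi}" "b \<in> {t0..pi}"
  shows "phi c lam a + phi c lam b \<le> 2 * phi c lam ((a+b)/2)"
proof -
  have H: "- phi c lam ((1 - 1/2) *\<^sub>R a + (1/2) *\<^sub>R b) \<le> (1 - 1/2) * (- phi c lam a) + (1/2) * (- phi c lam b)"
    by (rule convex_onD[OF phi_concave[OF c g0]]) (use ab in auto)
  have eq: "(1 - 1/2) *\<^sub>R a + (1/2) *\<^sub>R b = (a+b)/2" by simp
  have "- phi c lam ((a+b)/2) \<le> (1 - 1/2) * (- phi c lam a) + (1/2) * (- phi c lam b)"
    using H unfolding eq .
  thus ?thesis by simp
qed

lemma K_mono_deriv:
  assumes c: "c \<ge> 0" and x: "0 \<le> x" "x \<le> t0"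
  shows "0 \<le> c * sin (t0 - x) * gg c (t0 - x) - c/4 * sin (t0 + x/2) * gg c (t0 + x/2)"
proof -
  define w where "w = (t0 - x)/2"
  have w: "0 \<le> w" "w \<le> pi/3" using x unfolding w_def t0_def by auto
  have e1: "t0 - x = 2*w" unfolding w_def by simp
  have e2: "t0 + x/2 = pi - w" unfolding w_def t0_def by (simp add: field_simps)
  have sw: "sin w \<ge> 0" using w pi_gt3 by (intro sin_ge_zero) auto
  have cw: "cos w \<ge> 1/2"
  proof -
    have "cos (pi/3) \<le> cos w" using w pi_gt3 by (subst cos_mono_le_eq) auto
    thus ?thesis by (simp add: cos_60)
  qed
  have cc: "cos (2*w) \<ge> cos (pi - w)"
  proof -
    have "cos (2*w) + cos w = (2 * cos w - 1) * (cos w + 1)"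
      by (simp only: cos_double_cos) (simp add: power2_eq_square algebra_simps)
    also have "\<dots> \<ge> 0" using cw by (intro mult_nonneg_nonneg) auto
    finally show ?thesis by simp
  qed
  have gle: "gg c (pi - w) \<le> gg c (2*w)" by (rule gg_mono[OF c cc])
  have gpos: "gg c (pi - w) \<ge> 0" using gg_pos[of c "pi - w"] by simp
  have "sin w * gg c (pi - w) / 4 \<le> sin w * gg c (pi - w)" using sw gpos by simp
  also have "\<dots> \<le> sin w * gg c (2*w)" using sw gle by (intro mult_left_mono) auto
  also have "\<dots> \<le> (2 * sin w * cos w) * gg c (2*w)"
  proof -
    have "sin w \<le> 2 * sin w * cos w" using sw cw by (simp add: mult_left_mono[of "1/2" "cos w" "2 * sin w", simplified])
    thus ?thesis using gg_pos[of c "2*w"] by (intro mult_right_mono) auto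
  qed
  finally have "sin w * gg c (pi - w) / 4 \<le> sin (2*w) * gg c (2*w)" by (simp add: sin_double)
  hence "c * (sin w * gg c (pi - w) / 4) \<le> c * (sin (2*w) * gg c (2*w))" using c by (intro mult_left_mono)
  thus ?thesis unfolding e1 e2 by (simp add: algebra_simps)
qed

lemma K_mono:
  assumes c: "c \<ge> 0" and u: "0 \<le> u1" "u1 \<le> u2" "u2 \<le> t0"
  shows "gg c (t0 - u1) + gg c (t0 + u1/2)/2 \<le> gg c (t0 - u2) + gg c (t0 + u2/2)/2"
proof -
  have "(\<lambda>u. gg c (t0 - u) + gg c (t0 + u/2)/2) u1 \<le> (\<lambda>u. gg c (t0 - u) + gg c (t0 + u/2)/2) u2"
  proof (rule DERIV_nonneg_imp_nondecreasing[OF u(2)])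
    fix x assume x: "u1 \<le> x" "x \<le> u2"
    have "((\<lambda>u. gg c (t0 - u) + gg c (t0 + u/2)/2) has_real_derivative
          (c * sin (t0 - x) * gg c (t0 - x) - c/4 * sin (t0 + x/2) * gg c (t0 + x/2))) (at x)"
      unfolding gg_def by (auto intro!: derivative_eq_intros simp: algebra_simps)
    moreover have "0 \<le> c * sin (t0 - x) * gg c (t0 - x) - c/4 * sin (t0 + x/2) * gg c (t0 + x/2)"
      by (rule K_mono_deriv) (use c u x in auto)
    ultimately show "\<exists>y. ((\<lambda>u. gg c (t0 - u) + gg c (t0 + u/2)/2) has_real_derivative y) (at x) \<and> 0 \<le> y"
      by blast
  qed
  thus ?thesis by simp
qed

lemma T_bound:
  assumes c: "c \<ge> 0" and hM: "phi c lam 0 + 2 * phi c lam pi \<le> 0" and d: "0 \<le> d" "d \<le> t0"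
  shows "phi c lam (t0 - d) + 2 * phi c lam (t0 + d/2) \<le> 0"
proof -
  have p1: "phi c lam (t0 - d) = d^2 * remL c lam (-d)"
    using phi_rep[of "-d" c lam] d t0_bounds by simp
  have p2: "phi c lam (t0 + d/2) = (d/2)^2 * remL c lam (d/2)"
    using phi_rep[of "d/2" c lam] d t0_bounds by simp
  have q1: "phi c lam 0 = t0^2 * remL c lam (-t0)"
    using phi_rep[of "-t0" c lam] t0_bounds by simp
  have "t0 + t0/2 = pi" unfolding t0_def by simp
  hence q2: "phi c lam pi = (t0/2)^2 * remL c lam (t0/2)"
    using phi_rep[of "t0/2" c lam] t0_bounds by simp
  have X0: "remL c lam (-t0) + remL c lam (t0/2) / 2 \<le> 0"
  proof -
    have "t0^2 * (remL c lam (-t0) + remL c lam (t0/2) / 2) = phi c lam 0 + 2 * phi c lam pi"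
      unfolding q1 q2 by (simp add: power2_eq_square algebra_simps)
    hence "t0^2 * (remL c lam (-t0) + remL c lam (t0/2) / 2) \<le> 0" using hM by simp
    moreover have "t0^2 > 0" using t0_bounds by simp
    ultimately show ?thesis by (simp add: mult_le_0_iff)
  qed
  have cmp: "remL c lam (-d) + remL c lam (d/2) / 2 \<le> remL c lam (-t0) + remL c lam (t0/2) / 2"
  proof (rule has_integral_le)
    show "((\<lambda>s. (1-s) * (gg c (t0 + s*(-d)) - lam) + (1/2) * ((1-s) * (gg c (t0 + s*(d/2)) - lam)))
           has_integral (remL c lam (-d) + remL c lam (d/2) / 2)) {0..1}"
      using has_integral_add[OF remL_int[where c=c and d="-d" and lam=lam] has_integral_mult_right[OF remL_int[where c=c and d="d/2" and lam=lam], of "1/2"]] by simp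
    show "((\<lambda>s. (1-s) * (gg c (t0 + s*(-t0)) - lam) + (1/2) * ((1-s) * (gg c (t0 + s*(t0/2)) - lam)))
           has_integral (remL c lam (-t0) + remL c lam (t0/2) / 2)) {0..1}"
      using has_integral_add[OF remL_int[where c=c and d="-t0" and lam=lam] has_integral_mult_right[OF remL_int[where c=c and d="t0/2" and lam=lam], of "1/2"]] by simp
  next
    fix s :: real assume s: "s \<in> {0..1}"
    have "gg c (t0 - s*d) + gg c (t0 + (s*d)/2)/2 \<le> gg c (t0 - s*t0) + gg c (t0 + (s*t0)/2)/2"
    proof (rule K_mono[OF c])
      show "0 \<le> s * d" using s d by simp
      show "s * d \<le> s * t0" using s d by (intro mult_left_mono) auto
      show "s * t0 \<le> t0" using s t0_bounds by (simp add: mult_left_le_one_le)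
    qed
    hence "(1-s) * (gg c (t0 - s*d) + gg c (t0 + (s*d)/2)/2 - 3/2*lam) \<le> (1-s) * (gg c (t0 - s*t0) + gg c (t0 + (s*t0)/2)/2 - 3/2*lam)"
      using s by (intro mult_left_mono) auto
    moreover have "(1-s) * (gg c (t0 + s*(-d)) - lam) + (1/2) * ((1-s) * (gg c (t0 + s*(d/2)) - lam))
        = (1-s) * (gg c (t0 - s*d) + gg c (t0 + (s*d)/2)/2 - 3/2*lam)"
    proof -
      have "t0 + s*(-d) = t0 - s*d" "t0 + s*(d/2) = t0 + (s*d)/2" by simp_all
      thus ?thesis by (simp add: field_simps)
    qed
    moreover have "(1-s) * (gg c (t0 + s*(-t0)) - lam) + (1/2) * ((1-s) * (gg c (t0 + s*(t0/2)) - lam))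
        = (1-s) * (gg c (t0 - s*t0) + gg c (t0 + (s*t0)/2)/2 - 3/2*lam)"
    proof -
      have "t0 + s*(-t0) = t0 - s*t0" "t0 + s*(t0/2) = t0 + (s*t0)/2" by simp_all
      thus ?thesis by (simp add: field_simps)
    qed
    ultimately show "(1-s) * (gg c (t0 + s*(-d)) - lam) + (1/2) * ((1-s) * (gg c (t0 + s*(d/2)) - lam))
        \<le> (1-s) * (gg c (t0 + s*(-t0)) - lam) + (1/2) * ((1-s) * (gg c (t0 + s*(t0/2)) - lam))"
      by simp
  qed
  have "phi c lam (t0 - d) + 2 * phi c lam (t0 + d/2) = d^2 * (remL c lam (-d) + remL c lam (d/2) / 2)"
    unfolding p1 p2 by (simp add: power2_eq_square algebra_simps)
  also have "\<dots> \<le> 0" using cmp X0 by (simp add: mult_nonneg_nonpos)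
  finally show ?thesis .
qed

lemma caseA:
  assumes c: "c \<ge> 0" and g0: "gg c t0 \<le> lam" and hM: "phi c lam 0 + 2 * phi c lam pi \<le> 0"
    and a: "0 \<le> a2" "0 \<le> a3" "t0 + a2 \<le> pi" "t0 + a3 \<le> pi" "a2 + a3 \<le> t0"
  shows "phi c lam (t0 - (a2+a3)) + phi c lam (t0 + a2) + phi c lam (t0 + a3) \<le> 0"
proof -
  have H: "phi c lam (t0 + a2) + phi c lam (t0 + a3) \<le> 2 * phi c lam ((t0 + a2 + (t0 + a3))/2)"
    by (rule phi_mid[OF c g0]) (use a in auto)
  have eq: "(t0 + a2 + (t0 + a3))/2 = t0 + (a2+a3)/2" by simp
  have "phi c lam (t0 + a2) + phi c lam (t0 + a3) \<le> 2 * phi c lam (t0 + (a2+a3)/2)"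
    using H unfolding eq .
  moreover have "phi c lam (t0 - (a2+a3)) + 2 * phi c lam (t0 + (a2+a3)/2) \<le> 0"
    by (rule T_bound[OF c hM]) (use a in auto)
  ultimately show ?thesis by simp
qed

lemma main_phi_ordered:
  assumes c: "c \<ge> 0"
    and hE: "\<And>u. 0 \<le> u \<Longrightarrow> u \<le> pi/3 \<Longrightarrow> gg c (t0 - u) + gg c (t0 + u) \<le> 2*lam"
    and hM: "phi c lam 0 + 2 * phi c lam pi \<le> 0"
    and th: "0 \<le> x" "x \<le> pi" "0 \<le> y" "y \<le> pi" "0 \<le> z" "z \<le> pi" "x + y + z = 2*pi"
    and ord: "x \<le> t0" "t0 \<le> z"
  shows "phi c lam x + phi c lam y + phi c lam z \<le> 0"
proof -
  have g0: "gg c t0 \<le> lam" using hE[of 0] by simp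
  have s3: "x + y + z = 3 * t0" using th unfolding t0_def by simp
  show ?thesis
  proof (cases "y \<le> t0")
    case True
    define d1 where "d1 = t0 - x"
    define d2 where "d2 = t0 - y"
    have hx: "x = t0 + (-d1)" "y = t0 + (-d2)" "z = t0 + (d1+d2)" using s3 unfolding d1_def d2_def by auto
    have "d1^2 * remL c lam (-d1) + d2^2 * remL c lam (-d2) + (d1+d2)^2 * remL c lam (d1+d2) \<le> 0"
      by (rule caseB[OF c hE]) (use True ord th s3 t0_bounds in \<open>auto simp: d1_def d2_def t0_def\<close>)
    moreover have "phi c lam x = d1^2 * remL c lam (-d1)" using phi_rep[of "-d1" c lam] th hx by simp
    moreover have "phi c lam y = d2^2 * remL c lam (-d2)" using phi_rep[of "-d2" c lam] th hx by simp
    moreover have "phi c lam z = (d1+d2)^2 * remL c lam (d1+d2)" using phi_rep[of "d1+d2" c lam] th hx by simp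
    ultimately show ?thesis by simp
  next
    case False
    have "phi c lam (t0 - ((y - t0) + (z - t0))) + phi c lam (t0 + (y - t0)) + phi c lam (t0 + (z - t0)) \<le> 0"
      by (rule caseA[OF c g0 hM]) (use False ord th s3 in auto)
    moreover have "t0 - ((y - t0) + (z - t0)) = x" using s3 by simp
    ultimately show ?thesis by simp
  qed
qed

lemma main_phi:
  assumes c: "c \<ge> 0"
    and hE: "\<And>u. 0 \<le> u \<Longrightarrow> u \<le> pi/3 \<Longrightarrow> gg c (t0 - u) + gg c (t0 + u) \<le> 2*lam"
    and hM: "phi c lam 0 + 2 * phi c lam pi \<le> 0"
    and th: "0 \<le> x" "x \<le> pi" "0 \<le> y" "y \<le> pi" "0 \<le> z" "z \<le> pi" "x + y + z = 2*pi"
  shows "phi c lam x + phi c lam y + phi c lam z \<le> 0"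
proof -
  note M = main_phi_ordered[OF c hE hM]
  have s3: "x + y + z = 3 * t0" using th unfolding t0_def by simp
  consider "x \<le> t0" "t0 \<le> z" | "x \<le> t0" "t0 \<le> y" | "y \<le> t0" "t0 \<le> x" | "y \<le> t0" "t0 \<le> z"
    | "z \<le> t0" "t0 \<le> x" | "z \<le> t0" "t0 \<le> y"
    using s3 by linarith
  thus ?thesis
  proof cases
    case 1 thus ?thesis using M[of x y z] th by auto
  next
    case 2 thus ?thesis using M[of x z y] th by auto
  next
    case 3 thus ?thesis using M[of y z x] th by auto
  next
    case 4 thus ?thesis using M[of y x z] th by auto
  next
    case 5 thus ?thesis using M[of z y x] th by auto
  next
    case 6 thus ?thesis using M[of z x y] th by auto
  qed
qed

definition Fp :: "real \<Rightarrow> real \<Rightarrow> real \<Rightarrow> real \<Rightarrow> real \<Rightarrow> real" where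
  "Fp c al be ga t = -((al + be*t + ga*t^2) * gg c t) + (be + 2*ga*t) * (PP c t - PP c 0) - 2*ga*Qn c t"

definition Ep :: "real \<Rightarrow> real \<Rightarrow> real \<Rightarrow> real \<Rightarrow> real" where
  "Ep al be ga t = -((al + be*t + ga*t^2) * cos t) + (be + 2*ga*t) * sin t + 2*ga*cos t"

lemma Fp_int:
  assumes "a \<le> b" "a > -4"
  shows "((\<lambda>t. c * (al + be*t + ga*t^2) * sin t * gg c t) has_integral (Fp c al be ga b - Fp c al be ga a)) {a..b}"
proof (rule ftc_real[OF assms(1)])
  fix x assume x: "x \<in> {a..b}"
  hence x4: "x > -4" using assms by auto
  have d_gg: "(gg c has_real_derivative - c * sin x * gg c x) (at x)" by (rule gg_deriv)
  have d_PP: "((\<lambda>t. PP c t - PP c 0) has_real_derivative gg c x - 0) (at x)"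
    by (intro DERIV_diff PP_deriv x4 DERIV_const)
  have d_Qn: "(Qn c has_real_derivative PP c x - PP c 0) (at x)" by (rule Qn_deriv[OF x4])
  have d_p: "((\<lambda>t. al + be*t + ga*t^2) has_real_derivative (be + 2*ga*x)) (at x)"
    by (auto intro!: derivative_eq_intros)
  have d_p': "((\<lambda>t. be + 2*ga*t) has_real_derivative (2*ga)) (at x)"
    by (auto intro!: derivative_eq_intros)
  note D = DERIV_diff[OF DERIV_add[OF DERIV_minus[OF DERIV_mult[OF d_p d_gg]] DERIV_mult[OF d_p' d_PP]] DERIV_cmult[OF d_Qn, of "2*ga"]]
  show "((Fp c al be ga) has_real_derivative c * (al + be*x + ga*x^2) * sin x * gg c x) (at x)"
    unfolding Fp_def[abs_def]
    by (rule DERIV_cong[OF D]) (simp add: algebra_simps)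
qed

lemma Ep_int:
  assumes "a \<le> b"
  shows "((\<lambda>t. (al + be*t + ga*t^2) * sin t) has_integral (Ep al be ga b - Ep al be ga a)) {a..b}"
proof (rule ftc_real[OF assms(1)])
  fix x assume x: "x \<in> {a..b}"
  have d_p: "((\<lambda>t. al + be*t + ga*t^2) has_real_derivative (be + 2*ga*x)) (at x)"
    by (auto intro!: derivative_eq_intros)
  have d_p': "((\<lambda>t. be + 2*ga*t) has_real_derivative (2*ga)) (at x)"
    by (auto intro!: derivative_eq_intros)
  note D = DERIV_add[OF DERIV_add[OF DERIV_minus[OF DERIV_mult[OF d_p DERIV_cos]] DERIV_mult[OF d_p' DERIV_sin]] DERIV_cmult[OF DERIV_cos, of "2*ga"]]
  show "(Ep al be ga has_real_derivative (al + be*x + ga*x^2) * sin x) (at x)"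
    unfolding Ep_def[abs_def]
    by (rule DERIV_cong[OF D]) (simp add: algebra_simps)
qed

lemma gg_pi3: "gg c (pi/3) = exp (c/2)" unfolding gg_def by (simp add: cos_60)
lemma gg_t0: "gg c t0 = exp (-c/2)" unfolding gg_def t0_def by (simp add: cos_120)
lemma gg_pi: "gg c pi = exp (-c)" unfolding gg_def by simp
lemma gg_pi2: "gg c (pi/2) = 1" unfolding gg_def by simp

lemma Qn0: "Qn c 0 = 0" unfolding Qn_def by simp

lemma MA_lower:
  assumes c: "c > 0" and K: "0 \<le> K" "K \<le> 1/4"
  defines "b1 \<equiv> (1-K)*pi/3" and "a2 \<equiv> pi*t0" and "b2 \<equiv> -(pi+t0) - K*pi/3"
  defines "t1 \<equiv> (1-K)*t0"
  shows "3 * Qn c t0 - 2 * Qn c pi + pi/3*(1-K)*(PP c pi - PP c 0) + K*pi^2*exp(-c)/3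
       \<ge> c * (exp (c/2) * (Ep 0 b1 (-1/2) (pi/3) - Ep 0 b1 (-1/2) 0)
              + gg c t1 * ((Ep 0 b1 (-1/2) t0 - Ep 0 b1 (-1/2) (pi/3)) + (Ep a2 b2 1 pi - Ep a2 b2 1 t0)))"
proof -
  have tb: "pi/3 \<le> t0" "t0 \<le> pi" "0 < pi/3" using t0_bounds pi_gt3 unfolding t0_def by auto
  have t1b: "pi/2 \<le> t1" "t1 \<le> t0"
  proof -
    have "(3/4) * t0 \<le> (1-K) * t0" using K t0_bounds by (intro mult_right_mono) auto
    thus "pi/2 \<le> t1" unfolding t1_def t0_def by simp
    show "t1 \<le> t0" unfolding t1_def using K t0_bounds by (simp add: mult_left_le_one_le)
  qed
  have P1: "Fp c 0 b1 (-1/2) (pi/3) - Fp c 0 b1 (-1/2) 0 \<ge> c * exp (c/2) * (Ep 0 b1 (-1/2) (pi/3) - Ep 0 b1 (-1/2) 0)"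
  proof (rule has_integral_le[OF _ Fp_int])
    show "((\<lambda>t. c * exp (c/2) * ((0 + b1*t + (-1/2)*t^2) * sin t)) has_integral
          c * exp (c/2) * (Ep 0 b1 (-1/2) (pi/3) - Ep 0 b1 (-1/2) 0)) {0..pi/3}"
      by (rule has_integral_mult_right, rule Ep_int) (use tb in auto)
  next
    fix t assume t: "t \<in> {0..pi/3}"
    have r: "0 \<le> 0 + b1*t + (-1/2)*t^2"
    proof -
      have "0 + b1*t + (-1/2)*t^2 = t * (b1 - t/2)" by (simp add: power2_eq_square algebra_simps)
      moreover have "b1 - t/2 \<ge> 0"
      proof -
        have n1: "(1-K)*(2*pi) \<ge> (3/4)*(2*pi)" by (intro mult_right_mono) (use K pi_gt3 in auto)
        have tt: "t \<le> pi/3" using t by simp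
        have n2: "(1-K)*(2*pi) - 3*t \<ge> 0" using n1 tt pi_gt3 by linarith
        have eq: "b1 - t/2 = ((1-K)*(2*pi) - 3*t)/6" unfolding b1_def by (simp add: field_simps)
        have "((1-K)*(2*pi) - 3*t)/6 \<ge> 0" using n2 by simp
        with eq show ?thesis by linarith
      qed
      ultimately show ?thesis using t by simp
    qed
    have s: "sin t \<ge> 0" using t pi_gt3 by (intro sin_ge_zero) auto
    have g: "exp (c/2) \<le> gg c t"
      using gg_cos_mono[of c t "pi/3"] t c unfolding gg_pi3 by auto
    show "c * exp (c/2) * ((0 + b1*t + (-1/2)*t^2) * sin t) \<le> c * (0 + b1*t + (-1/2)*t^2) * sin t * gg c t"
    proof -
      have h: "(0 + b1*t + (-1/2)*t^2) * sin t * exp (c/2) \<le> (0 + b1*t + (-1/2)*t^2) * sin t * gg c t"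
        using r s g by (intro mult_left_mono) auto
      have "c * ((0 + b1*t + (-1/2)*t^2) * sin t * exp (c/2)) \<le> c * ((0 + b1*t + (-1/2)*t^2) * sin t * gg c t)"
        using mult_left_mono[OF h, of c] c by simp
      thus ?thesis by (simp add: algebra_simps)
    qed
  qed (use tb in auto)
  have P2: "Fp c 0 b1 (-1/2) t0 - Fp c 0 b1 (-1/2) (pi/3) \<ge> c * gg c t1 * (Ep 0 b1 (-1/2) t0 - Ep 0 b1 (-1/2) (pi/3))"
  proof (rule has_integral_le[OF _ Fp_int])
    show "((\<lambda>t. c * gg c t1 * ((0 + b1*t + (-1/2)*t^2) * sin t)) has_integral
          c * gg c t1 * (Ep 0 b1 (-1/2) t0 - Ep 0 b1 (-1/2) (pi/3))) {pi/3..t0}"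
      by (rule has_integral_mult_right, rule Ep_int) (use tb in auto)
  next
    fix t assume t: "t \<in> {pi/3..t0}"
    have e: "0 + b1*t + (-1/2)*t^2 = (t/2) * (t1 - t)"
      unfolding b1_def t1_def t0_def by (simp add: power2_eq_square algebra_simps)
    have s: "sin t \<ge> 0" using t tb by (intro sin_ge_zero) auto
    have key: "(0 + b1*t + (-1/2)*t^2) * gg c t1 \<le> (0 + b1*t + (-1/2)*t^2) * gg c t"
    proof (cases "t \<le> t1")
      case True
      have "gg c t1 \<le> gg c t" by (rule gg_cos_mono) (use c t True t1b tb in auto)
      moreover have "0 \<le> (t/2) * (t1 - t)" using True t tb by auto
      ultimately show ?thesis unfolding e by (intro mult_left_mono) auto
    next
      case False
      have "gg c t \<le> gg c t1" by (rule gg_cos_mono) (use c t False t1b tb in auto)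
      moreover have "(t/2) * (t1 - t) \<le> 0" using False t tb by (auto simp: mult_nonneg_nonpos)
      ultimately show ?thesis unfolding e by (intro mult_left_mono_neg) auto
    qed
    show "c * gg c t1 * ((0 + b1*t + (-1/2)*t^2) * sin t) \<le> c * (0 + b1*t + (-1/2)*t^2) * sin t * gg c t"
    proof -
      have h: "sin t * ((0 + b1*t + (-1/2)*t^2) * gg c t1) \<le> sin t * ((0 + b1*t + (-1/2)*t^2) * gg c t)"
        using mult_left_mono[OF key s] .
      have "c * (sin t * ((0 + b1*t + (-1/2)*t^2) * gg c t1)) \<le> c * (sin t * ((0 + b1*t + (-1/2)*t^2) * gg c t))"
        using mult_left_mono[OF h, of c] c by simp
      thus ?thesis by (simp add: algebra_simps)
    qed
  qed (use tb in auto)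
  have P3: "Fp c a2 b2 1 pi - Fp c a2 b2 1 t0 \<ge> c * gg c t1 * (Ep a2 b2 1 pi - Ep a2 b2 1 t0)"
  proof (rule has_integral_le[OF _ Fp_int])
    show "((\<lambda>t. c * gg c t1 * ((a2 + b2*t + 1*t^2) * sin t)) has_integral
          c * gg c t1 * (Ep a2 b2 1 pi - Ep a2 b2 1 t0)) {t0..pi}"
      by (rule has_integral_mult_right, rule Ep_int) (use tb in auto)
  next
    fix t assume t: "t \<in> {t0..pi}"
    have e: "a2 + b2*t + 1*t^2 = (t - pi) * (t - t0) - K*pi*t/3"
      unfolding a2_def b2_def by (simp add: power2_eq_square algebra_simps)
    have r: "a2 + b2*t + 1*t^2 \<le> 0"
    proof -
      have "(t - pi) * (t - t0) \<le> 0" using t by (auto simp: mult_nonpos_nonneg)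
      moreover have "K*pi*t/3 \<ge> 0" using K t tb by auto
      ultimately show ?thesis unfolding e by linarith
    qed
    have s: "sin t \<ge> 0" using t tb by (intro sin_ge_zero) auto
    have g: "gg c t \<le> gg c t1" by (rule gg_cos_mono) (use c t t1b tb in auto)
    have key: "(a2 + b2*t + 1*t^2) * gg c t1 \<le> (a2 + b2*t + 1*t^2) * gg c t"
      using r g by (intro mult_left_mono_neg) auto
    show "c * gg c t1 * ((a2 + b2*t + 1*t^2) * sin t) \<le> c * (a2 + b2*t + 1*t^2) * sin t * gg c t"
    proof -
      have h: "sin t * ((a2 + b2*t + 1*t^2) * gg c t1) \<le> sin t * ((a2 + b2*t + 1*t^2) * gg c t)"
        using mult_left_mono[OF key s] .
      have "c * (sin t * ((a2 + b2*t + 1*t^2) * gg c t1)) \<le> c * (sin t * ((a2 + b2*t + 1*t^2) * gg c t))"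
        using mult_left_mono[OF h, of c] c by simp
      thus ?thesis by (simp add: algebra_simps)
    qed
  qed (use tb in auto)
  have ID: "(Fp c 0 b1 (-1/2) t0 - Fp c 0 b1 (-1/2) 0) + (Fp c a2 b2 1 pi - Fp c a2 b2 1 t0)
      = 3 * Qn c t0 - 2 * Qn c pi + pi/3*(1-K)*(PP c pi - PP c 0) + K*pi^2*exp(-c)/3"
    unfolding Fp_def Qn0 gg_pi a2_def b2_def b1_def t0_def
    by (simp add: power2_eq_square field_simps)
  show ?thesis using P1 P2 P3 unfolding ID[symmetric] by (simp add: algebra_simps)
qed

lemma MB_lower:
  assumes c: "c > 0" and K: "0 \<le> K" "K \<le> 1/4"
  defines "b1 \<equiv> (1-K)*pi/9" and "a2 \<equiv> -(pi^2/18)" and "b2 \<equiv> pi/3 + (1-K)*pi/9"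
    and "a3 \<equiv> 7*pi^2/18" and "b3 \<equiv> -((8+K)*pi/9)"
    and "a4 \<equiv> pi^2/3" and "b4 \<equiv> -((15+2*K)*pi/18)"
  shows "2 * Qn c t0 - Qn c (pi/3) - Qn c pi + pi/9*(1-K)*(PP c pi - PP c 0) + K*pi^2*exp(-c)/9
       \<ge> c * exp (-c/2) * ((Ep 0 b1 0 (pi/3) - Ep 0 b1 0 0) + (Ep a2 b2 (-1/2) t0 - Ep a2 b2 (-1/2) (pi/3))
              + (Ep a4 b4 (1/2) pi - Ep a4 b4 (1/2) t0))"
proof -
  have tb: "pi/3 \<le> t0" "t0 \<le> pi" "0 < pi/3" using t0_bounds pi_gt3 unfolding t0_def by auto
  have P1: "Fp c 0 b1 0 (pi/3) - Fp c 0 b1 0 0 \<ge> c * exp (-c/2) * (Ep 0 b1 0 (pi/3) - Ep 0 b1 0 0)"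
  proof (rule has_integral_le[OF _ Fp_int])
    show "((\<lambda>t. c * exp (-c/2) * ((0 + b1*t + 0*t^2) * sin t)) has_integral
          c * exp (-c/2) * (Ep 0 b1 0 (pi/3) - Ep 0 b1 0 0)) {0..pi/3}"
      by (rule has_integral_mult_right, rule Ep_int) (use tb in auto)
  next
    fix t assume t: "t \<in> {0..pi/3}"
    have r: "0 \<le> 0 + b1*t + 0*t^2" unfolding b1_def using K t pi_gt3 by simp
    have s: "sin t \<ge> 0" using t pi_gt3 by (intro sin_ge_zero) auto
    have g: "exp (-c/2) \<le> gg c t"
      using gg_cos_mono[of c t t0] t c tb unfolding gg_t0 by auto
    have h: "(0 + b1*t + 0*t^2) * sin t * exp (-c/2) \<le> (0 + b1*t + 0*t^2) * sin t * gg c t"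
      using r s g by (intro mult_left_mono) auto
    have "c * ((0 + b1*t + 0*t^2) * sin t * exp (-c/2)) \<le> c * ((0 + b1*t + 0*t^2) * sin t * gg c t)"
      using mult_left_mono[OF h, of c] c by simp
    thus "c * exp (-c/2) * ((0 + b1*t + 0*t^2) * sin t) \<le> c * (0 + b1*t + 0*t^2) * sin t * gg c t"
      by (simp add: algebra_simps)
  qed (use tb in auto)
  have P2: "Fp c a2 b2 (-1/2) t0 - Fp c a2 b2 (-1/2) (pi/3) \<ge> c * exp (-c/2) * (Ep a2 b2 (-1/2) t0 - Ep a2 b2 (-1/2) (pi/3))"
  proof (rule has_integral_le[OF _ Fp_int])
    show "((\<lambda>t. c * exp (-c/2) * ((a2 + b2*t + (-1/2)*t^2) * sin t)) has_integral
          c * exp (-c/2) * (Ep a2 b2 (-1/2) t0 - Ep a2 b2 (-1/2) (pi/3))) {pi/3..t0}"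
      by (rule has_integral_mult_right, rule Ep_int) (use tb in auto)
  next
    fix t assume t: "t \<in> {pi/3..t0}"
    define vv where "vv = t - pi/3"
    have vv: "0 \<le> vv" "vv \<le> pi/3" using t unfolding vv_def t0_def by auto
    have e: "a2 + b2*t + (-1/2)*t^2 = (1-K)*pi*t/9 - vv^2/2"
      unfolding a2_def b2_def vv_def by (simp add: power2_eq_square field_simps)
    have r: "0 \<le> a2 + b2*t + (-1/2)*t^2"
    proof -
      have "(3/4) * (pi*t) \<le> (1-K) * (pi*t)" using K t tb by (intro mult_right_mono) auto
      hence a: "pi*t/12 \<le> (1-K)*pi*t/9" by simp
      have f1: "vv * vv \<le> vv * (pi/3)" using vv by (intro mult_left_mono) auto
      have f2: "pi * vv \<le> pi * (pi/3)" using vv pi_gt3 by (intro mult_left_mono) auto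
      have f3: "pi * t = pi * vv + pi * (pi/3)" unfolding vv_def by (simp add: algebra_simps)
      have "vv^2 / 2 = vv * vv / 2" by (simp add: power2_eq_square)
      also have "\<dots> \<le> vv * (pi/3) / 2" using f1 by (intro divide_right_mono) auto
      also have "\<dots> = pi * vv / 6" by simp
      also have "\<dots> \<le> (pi * vv + pi * (pi/3)) / 12"
      proof -
        have gen: "\<And>A B::real. A \<le> B \<Longrightarrow> A/6 \<le> (A+B)/12" by (simp add: field_simps)
        show ?thesis by (rule gen[OF f2])
      qed
      also have "\<dots> = pi*t/12" using f3 by simp
      finally have "vv^2/2 \<le> pi*t/12" .
      thus ?thesis unfolding e using a by linarith
    qed
    have s: "sin t \<ge> 0" using t tb by (intro sin_ge_zero) auto
    have g: "exp (-c/2) \<le> gg c t"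
      using gg_cos_mono[of c t t0] t c tb unfolding gg_t0 by auto
    have h: "(a2 + b2*t + (-1/2)*t^2) * sin t * exp (-c/2) \<le> (a2 + b2*t + (-1/2)*t^2) * sin t * gg c t"
      using r s g by (intro mult_left_mono) auto
    have "c * ((a2 + b2*t + (-1/2)*t^2) * sin t * exp (-c/2)) \<le> c * ((a2 + b2*t + (-1/2)*t^2) * sin t * gg c t)"
      using mult_left_mono[OF h, of c] c by simp
    thus "c * exp (-c/2) * ((a2 + b2*t + (-1/2)*t^2) * sin t) \<le> c * (a2 + b2*t + (-1/2)*t^2) * sin t * gg c t"
      by (simp add: algebra_simps)
  qed (use tb in auto)
  have P3: "Fp c a3 b3 (1/2) pi - Fp c a3 b3 (1/2) t0 \<ge> c * exp (-c/2) * (Ep a4 b4 (1/2) pi - Ep a4 b4 (1/2) t0)"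
  proof (rule has_integral_le[OF _ Fp_int])
    show "((\<lambda>t. c * exp (-c/2) * ((a4 + b4*t + (1/2)*t^2) * sin t)) has_integral
          c * exp (-c/2) * (Ep a4 b4 (1/2) pi - Ep a4 b4 (1/2) t0)) {t0..pi}"
      by (rule has_integral_mult_right, rule Ep_int) (use tb in auto)
  next
    fix t assume t: "t \<in> {t0..pi}"
    define u where "u = pi - t"
    have u: "0 \<le> u" "u \<le> pi/3" using t unfolding u_def t0_def by auto
    define h where "h = u * (pi/18)"
    have e3: "a3 + b3*t + (1/2)*t^2 = u * (u/2 - pi/9) - K*pi*t/9"
      unfolding a3_def b3_def u_def by (simp add: power2_eq_square field_simps)
    have e4: "a4 + b4*t + (1/2)*t^2 = (a3 + b3*t + (1/2)*t^2) - h"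
      unfolding a3_def b3_def a4_def b4_def h_def u_def by (simp add: power2_eq_square field_simps)
    have sh: "a3 + b3*t + (1/2)*t^2 \<le> h"
    proof -
      have "u/2 - pi/9 \<le> pi/18" using u by simp
      hence "u * (u/2 - pi/9) \<le> u * (pi/18)" using u by (intro mult_left_mono) auto
      moreover have "K*pi*t/9 \<ge> 0" using K t tb by simp
      ultimately show ?thesis unfolding e3 h_def by linarith
    qed
    have h0: "h \<ge> 0" unfolding h_def using u pi_gt3 by simp
    have s: "sin t \<ge> 0" using t tb by (intro sin_ge_zero) auto
    have gt0: "gg c t \<le> exp (-c/2)"
      using gg_cos_mono[of c t0 t] t c tb unfolding gg_t0 by auto
    have gp: "gg c t \<ge> 0" using gg_pos[of c t] by simp
    have key: "(a3 + b3*t + (1/2)*t^2 - h) * exp (-c/2) \<le> (a3 + b3*t + (1/2)*t^2) * gg c t"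
    proof (cases "a3 + b3*t + (1/2)*t^2 \<ge> 0")
      case True
      have "(a3 + b3*t + (1/2)*t^2) * (gg c t - exp (-c/2)) \<ge> (a3 + b3*t + (1/2)*t^2) * (- exp (-c/2))"
        using True gp by (intro mult_left_mono) auto
      moreover have "(a3 + b3*t + (1/2)*t^2) * exp (-c/2) \<le> h * exp (-c/2)"
        using sh by (intro mult_right_mono) auto
      ultimately show ?thesis by (simp add: algebra_simps)
    next
      case False
      have "(a3 + b3*t + (1/2)*t^2) * (gg c t - exp (-c/2)) \<ge> 0"
        using False gt0 by (intro mult_nonpos_nonpos) auto
      moreover have "h * exp (-c/2) \<ge> 0" using h0 by simp
      ultimately show ?thesis by (simp add: algebra_simps)
    qed
    have h: "sin t * ((a3 + b3*t + (1/2)*t^2 - h) * exp (-c/2)) \<le> sin t * ((a3 + b3*t + (1/2)*t^2) * gg c t)"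
      using mult_left_mono[OF key s] .
    have "c * (sin t * ((a3 + b3*t + (1/2)*t^2 - h) * exp (-c/2))) \<le> c * (sin t * ((a3 + b3*t + (1/2)*t^2) * gg c t))"
      using mult_left_mono[OF h, of c] c by simp
    thus "c * exp (-c/2) * ((a4 + b4*t + (1/2)*t^2) * sin t) \<le> c * (a3 + b3*t + (1/2)*t^2) * sin t * gg c t"
      unfolding e4 by (simp add: algebra_simps)
  qed (use tb in auto)
  have ID: "(Fp c 0 b1 0 (pi/3) - Fp c 0 b1 0 0) + (Fp c a2 b2 (-1/2) t0 - Fp c a2 b2 (-1/2) (pi/3))
      + (Fp c a3 b3 (1/2) pi - Fp c a3 b3 (1/2) t0)
      = 2 * Qn c t0 - Qn c (pi/3) - Qn c pi + pi/9*(1-K)*(PP c pi - PP c 0) + K*pi^2*exp(-c)/9"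
    unfolding Fp_def Qn0 gg_pi a2_def b2_def b1_def a3_def b3_def t0_def
    by (simp add: power2_eq_square field_simps)
  show ?thesis using P1 P2 P3 unfolding ID[symmetric] by (simp add: algebra_simps)
qed

lemma kB_mono:
  assumes c: "c \<ge> 0" and u: "0 \<le> u1" "u1 \<le> u2" "u2 \<le> pi/3"
  shows "gg c (t0 - u1) + gg c (t0 + u1) \<le> gg c (t0 - u2) + gg c (t0 + u2)"
proof -
  have "(\<lambda>u. gg c (t0 - u) + gg c (t0 + u)) u1 \<le> (\<lambda>u. gg c (t0 - u) + gg c (t0 + u)) u2"
  proof (rule DERIV_nonneg_imp_nondecreasing[OF u(2)])
    fix x assume x: "u1 \<le> x" "x \<le> u2"
    have D: "((\<lambda>u. gg c (t0 - u) + gg c (t0 + u)) has_real_derivative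
          (c * sin (t0 - x) * gg c (t0 - x) - c * sin (t0 + x) * gg c (t0 + x))) (at x)"
      unfolding gg_def by (auto intro!: derivative_eq_intros simp: algebra_simps)
    have sx: "sin x \<ge> 0" using x u pi_gt3 by (intro sin_ge_zero) auto
    have s1: "sin (t0 - x) - sin (t0 + x) = sin x"
      unfolding sin_diff sin_add t0_def by (simp add: cos_120)
    have c1: "cos (t0 - x) - cos (t0 + x) = sqrt 3 * sin x"
      unfolding cos_diff cos_add t0_def by (simp add: sin_120)
    have s2: "sin (t0 + x) \<ge> 0" using x u t0_bounds unfolding t0_def by (intro sin_ge_zero) auto
    have "sqrt 3 * sin x \<ge> 0" using sx by simp
    hence gle: "gg c (t0 + x) \<le> gg c (t0 - x)" using c1 by (intro gg_mono[OF c]) linarith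
    have "sin (t0 + x) * gg c (t0 + x) \<le> sin (t0 - x) * gg c (t0 - x)"
    proof -
      have "sin (t0 + x) * gg c (t0 + x) \<le> sin (t0 + x) * gg c (t0 - x)" using s2 gle by (intro mult_left_mono)
      also have "\<dots> \<le> sin (t0 - x) * gg c (t0 - x)" using s1 sx gg_pos[of c "t0 - x"] by (intro mult_right_mono) auto
      finally show ?thesis .
    qed
    hence "0 \<le> c * sin (t0 - x) * gg c (t0 - x) - c * sin (t0 + x) * gg c (t0 + x)"
      using mult_left_mono[of "sin (t0 + x) * gg c (t0 + x)" "sin (t0 - x) * gg c (t0 - x)" c] c
      by (simp add: algebra_simps)
    thus "\<exists>y. ((\<lambda>u. gg c (t0 - u) + gg c (t0 + u)) has_real_derivative y) (at x) \<and> 0 \<le> y"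
      using D by blast
  qed
  thus ?thesis by simp
qed

lemma caseB2:
  assumes c: "c \<ge> 0" and g0: "gg c t0 \<le> lam"
    and hB: "phi c lam (pi/3) + phi c lam pi \<le> 0"
    and d: "d1 \<ge> 0" "d2 \<ge> 0" "d1 + d2 \<le> pi/3"
  shows "d1^2 * remL c lam (-d1) + d2^2 * remL c lam (-d2) + (d1+d2)^2 * remL c lam (d1+d2) \<le> 0"
proof -
  define D where "D = d1 + d2"
  have D: "0 \<le> D" "D \<le> pi/3" "d1 \<le> D" "d2 \<le> D" using d unfolding D_def by auto
  have tb: "pi/3 \<le> t0" "t0 \<le> pi" using t0_bounds pi_gt3 unfolding t0_def by auto
  have Rneg: "remL c lam (-di) \<le> remL c lam (-D)" if di: "0 \<le> di" "di \<le> D" for di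
  proof (rule has_integral_le[OF remL_int remL_int])
    fix s :: real assume s: "s \<in> {0..1}"
    have "s * di \<le> s * D" using s di by (intro mult_left_mono) auto
    moreover have "s * D \<le> pi/3"
    proof -
      have "s * D \<le> 1 * D" using s D by (intro mult_right_mono) auto
      thus ?thesis using D by simp
    qed
    moreover have "0 \<le> s * di" using s di by simp
    ultimately have "gg c (t0 + s*(-di)) \<le> gg c (t0 + s*(-D))"
      using gg_cos_mono[of c "t0 - s*D" "t0 - s*di"] c s di tb by auto
    thus "(1-s) * (gg c (t0 + s*(-di)) - lam) \<le> (1-s) * (gg c (t0 + s*(-D)) - lam)"
      using s by (intro mult_left_mono) auto
  qed
  have Rpos: "remL c lam D \<le> 0"
  proof (rule has_integral_le[OF remL_int has_integral_0])
    fix s :: real assume s: "s \<in> {0..1}"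
    have "s * D \<le> pi/3"
    proof -
      have "s * D \<le> 1 * D" using s D by (intro mult_right_mono) auto
      thus ?thesis using D by simp
    qed
    hence "gg c (t0 + s*D) \<le> gg c t0"
      using gg_cos_mono[of c t0 "t0 + s*D"] c s D tb unfolding t0_def by auto
    thus "(1-s) * (gg c (t0 + s*D) - lam) \<le> 0"
      using s g0 by (intro mult_nonneg_nonpos) auto
  qed
  have Rsum: "remL c lam (-D) + remL c lam D \<le> 0"
  proof -
    have cmp: "remL c lam (-D) + remL c lam D \<le> remL c lam (-(pi/3)) + remL c lam (pi/3)"
    proof (rule has_integral_le[OF has_integral_add[OF remL_int remL_int] has_integral_add[OF remL_int remL_int]])
      fix s :: real assume s: "s \<in> {0..1}"
      have "gg c (t0 - s*D) + gg c (t0 + s*D) \<le> gg c (t0 - s*(pi/3)) + gg c (t0 + s*(pi/3))"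
      proof (rule kB_mono[OF c])
        show "0 \<le> s * D" using s D by simp
        show "s * D \<le> s * (pi/3)" using s D by (intro mult_left_mono) auto
        show "s * (pi/3) \<le> pi/3" using s pi_gt3 by (simp add: mult_left_le_one_le)
      qed
      hence "(1-s) * (gg c (t0 - s*D) + gg c (t0 + s*D) - 2*lam) \<le> (1-s) * (gg c (t0 - s*(pi/3)) + gg c (t0 + s*(pi/3)) - 2*lam)"
        using s by (intro mult_left_mono) auto
      moreover have "(1-s) * (gg c (t0 + s*(-D)) - lam) + (1-s) * (gg c (t0 + s*D) - lam) = (1-s) * (gg c (t0 - s*D) + gg c (t0 + s*D) - 2*lam)"
        by (simp add: algebra_simps)
      moreover have "(1-s) * (gg c (t0 + s*(-(pi/3))) - lam) + (1-s) * (gg c (t0 + s*(pi/3)) - lam) = (1-s) * (gg c (t0 - s*(pi/3)) + gg c (t0 + s*(pi/3)) - 2*lam)"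
        by (simp add: algebra_simps)
      ultimately show "(1-s) * (gg c (t0 + s*(-D)) - lam) + (1-s) * (gg c (t0 + s*D) - lam)
          \<le> (1-s) * (gg c (t0 + s*(-(pi/3))) - lam) + (1-s) * (gg c (t0 + s*(pi/3)) - lam)" by simp
    qed
    have p1: "phi c lam (pi/3) = (pi/3)^2 * remL c lam (-(pi/3))"
      using phi_rep[of "-(pi/3)" c lam] t0_bounds unfolding t0_def by simp
    have p2: "phi c lam pi = (pi/3)^2 * remL c lam (pi/3)"
      using phi_rep[of "pi/3" c lam] t0_bounds unfolding t0_def by simp
    have "(pi/3)^2 * (remL c lam (-(pi/3)) + remL c lam (pi/3)) \<le> 0" using hB unfolding p1 p2 by (simp add: algebra_simps)
    moreover have "(pi/3)^2 > 0" using pi_gt3 by simp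
    ultimately have "remL c lam (-(pi/3)) + remL c lam (pi/3) \<le> 0" by (simp add: mult_le_0_iff)
    thus ?thesis using cmp by linarith
  qed
  have "d1^2 * remL c lam (-d1) + d2^2 * remL c lam (-d2) + D^2 * remL c lam D \<le> 0"
  proof (cases "remL c lam (-D) \<ge> 0")
    case True
    have "d1^2 * remL c lam (-d1) \<le> d1^2 * remL c lam (-D)" using Rneg[of d1] D d by (intro mult_left_mono) auto
    moreover have "d2^2 * remL c lam (-d2) \<le> d2^2 * remL c lam (-D)" using Rneg[of d2] D d by (intro mult_left_mono) auto
    moreover have "(d1^2 + d2^2) * remL c lam (-D) \<le> D^2 * remL c lam (-D)"
    proof -
      have "d1^2 + d2^2 \<le> D^2" unfolding D_def using d by (simp add: power2_eq_square algebra_simps)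
      thus ?thesis using True by (intro mult_right_mono) auto
    qed
    moreover have "D^2 * (remL c lam (-D) + remL c lam D) \<le> 0" using Rsum by (simp add: mult_nonneg_nonpos)
    ultimately show ?thesis by (simp add: algebra_simps)
  next
    case False
    have "d1^2 * remL c lam (-d1) \<le> d1^2 * remL c lam (-D)" using Rneg[of d1] D d by (intro mult_left_mono) auto
    moreover have "d2^2 * remL c lam (-d2) \<le> d2^2 * remL c lam (-D)" using Rneg[of d2] D d by (intro mult_left_mono) auto
    moreover have "d1^2 * remL c lam (-D) \<le> 0" "d2^2 * remL c lam (-D) \<le> 0" using False by (auto simp: mult_nonneg_nonpos)
    moreover have "D^2 * remL c lam D \<le> 0" using Rpos by (simp add: mult_nonneg_nonpos)
    ultimately show ?thesis by linarith
  qed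
  thus ?thesis unfolding D_def .
qed

lemma main_phi_ordered2:
  assumes c: "c \<ge> 0" and g0: "gg c t0 \<le> lam"
    and hB: "phi c lam (pi/3) + phi c lam pi \<le> 0"
    and hM: "phi c lam 0 + 2 * phi c lam pi \<le> 0"
    and th: "0 \<le> x" "x \<le> pi" "0 \<le> y" "y \<le> pi" "0 \<le> z" "z \<le> pi" "x + y + z = 2*pi"
    and ord: "x \<le> t0" "t0 \<le> z"
  shows "phi c lam x + phi c lam y + phi c lam z \<le> 0"
proof -
  have s3: "x + y + z = 3 * t0" using th unfolding t0_def by simp
  show ?thesis
  proof (cases "y \<le> t0")
    case True
    define d1 where "d1 = t0 - x"
    define d2 where "d2 = t0 - y"
    have hx: "x = t0 + (-d1)" "y = t0 + (-d2)" "z = t0 + (d1+d2)" using s3 unfolding d1_def d2_def by auto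
    have "d1^2 * remL c lam (-d1) + d2^2 * remL c lam (-d2) + (d1+d2)^2 * remL c lam (d1+d2) \<le> 0"
      by (rule caseB2[OF c g0 hB]) (use True ord th s3 t0_bounds in \<open>auto simp: d1_def d2_def t0_def\<close>)
    moreover have "phi c lam x = d1^2 * remL c lam (-d1)" using phi_rep[of "-d1" c lam] th hx by simp
    moreover have "phi c lam y = d2^2 * remL c lam (-d2)" using phi_rep[of "-d2" c lam] th hx by simp
    moreover have "phi c lam z = (d1+d2)^2 * remL c lam (d1+d2)" using phi_rep[of "d1+d2" c lam] th hx by simp
    ultimately show ?thesis by simp
  next
    case False
    have "phi c lam (t0 - ((y - t0) + (z - t0))) + phi c lam (t0 + (y - t0)) + phi c lam (t0 + (z - t0)) \<le> 0"
      by (rule caseA[OF c g0 hM]) (use False ord th s3 in auto)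
    moreover have "t0 - ((y - t0) + (z - t0)) = x" using s3 by simp
    ultimately show ?thesis by simp
  qed
qed

lemma main_phi2:
  assumes c: "c \<ge> 0" and g0: "gg c t0 \<le> lam"
    and hB: "phi c lam (pi/3) + phi c lam pi \<le> 0"
    and hM: "phi c lam 0 + 2 * phi c lam pi \<le> 0"
    and th: "0 \<le> x" "x \<le> pi" "0 \<le> y" "y \<le> pi" "0 \<le> z" "z \<le> pi" "x + y + z = 2*pi"
  shows "phi c lam x + phi c lam y + phi c lam z \<le> 0"
proof -
  note M = main_phi_ordered2[OF c g0 hB hM]
  have s3: "x + y + z = 3 * t0" using th unfolding t0_def by simp
  consider "x \<le> t0" "t0 \<le> z" | "x \<le> t0" "t0 \<le> y" | "y \<le> t0" "t0 \<le> x" | "y \<le> t0" "t0 \<le> z"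
    | "z \<le> t0" "t0 \<le> x" | "z \<le> t0" "t0 \<le> y"
    using s3 by linarith
  thus ?thesis
  proof cases
    case 1 thus ?thesis using M[of x y z] th by auto
  next
    case 2 thus ?thesis using M[of x z y] th by auto
  next
    case 3 thus ?thesis using M[of y z x] th by auto
  next
    case 4 thus ?thesis using M[of y x z] th by auto
  next
    case 5 thus ?thesis using M[of z y x] th by auto
  next
    case 6 thus ?thesis using M[of z x y] th by auto
  qed
qed

lemma pi_b: "31415/10000 \<le> pi" "pi \<le> 31416/10000" using pi_approx by auto

lemma pi2_b: "98690/10000 \<le> pi^2" "pi^2 \<le> 98697/10000"
proof -
  have "(31415/10000::real)^2 \<le> pi^2" using pi_b by (intro power_mono) auto
  thus "98690/10000 \<le> pi^2" by (simp add: power2_eq_square)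
  have "pi^2 \<le> (31416/10000::real)^2" using pi_b pi_gt_zero by (intro power_mono) auto
  thus "pi^2 \<le> 98697/10000" by (simp add: power2_eq_square)
qed

lemma sqrt3_b: "1732/1000 \<le> sqrt 3" "sqrt 3 \<le> 17321/10000"
proof -
  show "1732/1000 \<le> sqrt 3" by (rule real_le_rsqrt) (simp add: power2_eq_square)
  have "sqrt 3 \<le> sqrt ((17321/10000)^2)" by (subst real_sqrt_le_iff) (simp add: power2_eq_square)
  thus "sqrt 3 \<le> 17321/10000" by simp
qed

lemma pis3_b: "54410/10000 \<le> pi * sqrt 3" "pi * sqrt 3 \<le> 54416/10000"
proof -
  have "(31415/10000) * (1732/1000) \<le> pi * sqrt 3" using pi_b sqrt3_b by (intro mult_mono) auto
  thus "54410/10000 \<le> pi * sqrt 3" by simp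
  have "pi * sqrt 3 \<le> (31416/10000) * (17321/10000)" using pi_b sqrt3_b by (intro mult_mono) auto
  thus "pi * sqrt 3 \<le> 54416/10000" by simp
qed

lemma a_b: "864/1000 \<le> (3::real) powr (4/3) / 5" "(3::real) powr (4/3) / 5 \<le> 1"
proof -
  define x where "x = (3::real) powr (4/3)"
  have xp: "x > 0" unfolding x_def by simp
  have "x ^ 3 = x powr (real 3)" using powr_realpow[OF xp, of 3] by simp
  also have "\<dots> = 3 powr (4/3 * 3)" unfolding x_def by (simp add: powr_powr)
  also have "\<dots> = 81" by simp
  finally have x3: "x^3 = 81" .
  show "864/1000 \<le> (3::real) powr (4/3) / 5"
  proof (rule ccontr)
    assume "\<not> ?thesis"
    hence "x < 432/100" unfolding x_def by simp
    hence "x^3 < (432/100)^3" using xp by (intro power_strict_mono) auto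
    thus False using x3 by (simp add: power3_eq_cube)
  qed
  show "(3::real) powr (4/3) / 5 \<le> 1"
  proof (rule ccontr)
    assume "\<not> ?thesis"
    hence "x > 5" unfolding x_def by simp
    hence "5^3 < x^3" by (intro power_strict_mono) auto
    thus False using x3 by simp
  qed
qed

lemma K_bounds:
  fixes c :: real
  assumes c: "c > 0"
  defines "k \<equiv> 0.158 * (- 1 + (1 - 3 powr (4/3) / 5) * exp (- c * pi / 2) + 3 powr (4/3) / 5 * exp (- c * pi / 6))"
  shows "0 \<le> -k" "-k \<le> 158/1000" "-k \<le> 1053/10000 * c"
proof -
  define a where "a = 3 powr (4/3) / (5::real)"
  have a: "864/1000 \<le> a" "a \<le> 1" unfolding a_def using a_b by auto
  define e1 where "e1 = exp (- c * pi / 2)"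
  define e2 where "e2 = exp (- c * pi / 6)"
  have e1: "0 \<le> e1" "e1 \<le> 1" unfolding e1_def using c pi_gt_zero by auto
  have e2: "0 \<le> e2" "e2 \<le> 1" unfolding e2_def using c pi_gt_zero by auto
  have kk: "-k = 158/1000 * (1 - (1-a)*e1 - a*e2)" unfolding k_def a_def e1_def e2_def by (simp add: field_simps)
  have s1: "(1-a)*e1 \<le> (1-a)" using a e1 by (simp add: mult_left_le)
  have s2: "a*e2 \<le> a" using a e2 by (simp add: mult_left_le)
  have s3: "0 \<le> (1-a)*e1" "0 \<le> a*e2" using a e1 e2 by auto
  show "0 \<le> -k" unfolding kk using s1 s2 by simp
  have "1 - (1-a)*e1 - a*e2 \<le> 1" using s3 by linarith
  thus "-k \<le> 158/1000" unfolding kk by (simp add: mult.commute)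
  have l1: "1 - e1 \<le> c*pi/2" using exp_ge_add_one_self[of "- c * pi / 2"] unfolding e1_def by simp
  have l2: "1 - e2 \<le> c*pi/6" using exp_ge_add_one_self[of "- c * pi / 6"] unfolding e2_def by simp
  have "1 - (1-a)*e1 - a*e2 = (1-a)*(1 - e1) + a*(1-e2)" by (simp add: algebra_simps)
  also have "\<dots> \<le> (1-a)*(c*pi/2) + a*(c*pi/6)"
    using a l1 l2 by (intro add_mono mult_left_mono) auto
  also have "\<dots> = (c*pi) * (1/2 - a/3)" by (simp add: field_simps)
  also have "\<dots> \<le> (c*pi) * (212/1000)" using a c pi_gt_zero by (intro mult_left_mono) auto
  also have "\<dots> \<le> (c*(31416/10000)) * (212/1000)" using c pi_b by (intro mult_right_mono mult_left_mono) auto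
  finally have "1 - (1-a)*e1 - a*e2 \<le> (c*(31416/10000)) * (212/1000)" .
  moreover have gen: "\<And>X c::real. c \<ge> 0 \<Longrightarrow> X \<le> (c*(31416/10000)) * (212/1000) \<Longrightarrow> 158/1000 * X \<le> 1053/10000 * c"
    by (simp add: field_simps)
  ultimately show "-k \<le> 1053/10000 * c" unfolding kk using c by simp
qed

lemma MB_scalar:
  fixes c K :: real
  assumes c: "c > 0" and K: "0 \<le> K" "K \<le> 158/1000" "K \<le> 1053/10000 * c"
  shows "c * exp (-c/2) * (1/2 - K*pi^2/9 - pi/18*(sqrt 3/2 - pi/6)) \<ge> K*pi^2*exp(-c)/9"
proof -
  have kp: "K*pi^2 \<le> K*(98697/10000)" using K pi2_b by (intro mult_left_mono) auto
  have e: "1/2 - K*pi^2/9 - pi/18*(sqrt 3/2 - pi/6) = 1/2 - (1/9)*(K*pi^2) - (1/36)*(pi * sqrt 3) + (1/108)*pi^2"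
    by (simp add: field_simps power2_eq_square)
  have B: "1/2 - K*pi^2/9 - pi/18*(sqrt 3/2 - pi/6) \<ge> 44/100 - 10967/10000 * K"
    unfolding e using kp pis3_b pi2_b K by linarith
  have cB: "c * (44/100 - 10967/10000 * K) \<ge> 10967/10000 * K"
  proof (cases "c \<le> 3/2")
    case True
    have f1: "c*K \<le> 1053/10000 * (c*c)" using mult_left_mono[OF K(3), of c] c by (simp add: algebra_simps)
    have f2: "c*c \<le> 3/2 * c" using True c by (intro mult_right_mono) auto
    have "c * (44/100 - 10967/10000 * K) = 44/100 * c - 10967/10000 * (c*K)" by (simp add: algebra_simps)
    thus ?thesis using f1 f2 K c by linarith
  next
    case False
    have f1: "c*K \<le> 158/1000 * c" using mult_left_mono[OF K(2), of c] c by (simp add: algebra_simps)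
    have "c * (44/100 - 10967/10000 * K) = 44/100 * c - 10967/10000 * (c*K)" by (simp add: algebra_simps)
    thus ?thesis using f1 False K by linarith
  qed
  have ce: "c * exp (-c/2) \<ge> 0" using c by simp
  have "c * exp (-c/2) * (1/2 - K*pi^2/9 - pi/18*(sqrt 3/2 - pi/6)) \<ge> c * exp (-c/2) * (44/100 - 10967/10000 * K)"
    using mult_left_mono[OF B ce] .
  also have "c * exp (-c/2) * (44/100 - 10967/10000 * K) = exp (-c/2) * (c * (44/100 - 10967/10000 * K))" by simp
  also have "\<dots> \<ge> exp (-c/2) * (10967/10000 * K)" using cB by (intro mult_left_mono) auto
  also have "exp (-c/2) * (10967/10000 * K) \<ge> exp (-c) * (10967/10000 * K)"
    using K c by (intro mult_right_mono) auto
  also have "exp (-c) * (10967/10000 * K) \<ge> exp (-c) * (K*pi^2/9)"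
  proof -
    have "K*pi^2/9 \<le> 10967/10000 * K" using kp K by linarith
    thus ?thesis by (intro mult_left_mono) auto
  qed
  finally show ?thesis by (simp add: algebra_simps)
qed

lemma prod3_lb:
  fixes x y z lx ly lz :: real
  assumes "lx \<le> x" "ly \<le> y" "lz \<le> z" "0 \<le> lx" "0 \<le> ly" "0 \<le> lz"
  shows "lx * ly * lz \<le> x * y * z"
  using assms by (intro mult_mono) (auto intro: mult_nonneg_nonneg order_trans[OF _ mult_mono])

lemma MA_scalar:
  fixes c K G :: real
  assumes c: "c > 0" and K: "0 \<le> K" "K \<le> 158/1000" "K \<le> 1053/10000 * c"
    and G: "exp (-c/2) \<le> G" "G \<le> 1"
  defines "A1 \<equiv> -(1-K)*pi^2/18 + pi^2/36 - K*pi * sqrt 3/6 + 1/2" and "I \<equiv> 1/2 - K*pi^2/3"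
  shows "c * (exp (c/2) * A1 + G * (I - A1)) \<ge> K*pi^2*exp(-c)/3"
proof -
  have kp1: "K*pi^2 \<le> K*(98697/10000)" using K pi2_b by (intro mult_left_mono) auto
  have kp2: "K*(98690/10000) \<le> K*pi^2" using K pi2_b by (intro mult_left_mono) auto
  have ks1: "K*(pi * sqrt 3) \<le> K*(54416/10000)" using K pis3_b by (intro mult_left_mono) auto
  have ks2: "K*(54410/10000) \<le> K*(pi * sqrt 3)" using K pis3_b by (intro mult_left_mono) auto
  have eA: "A1 = 1/2 - (1/36)*pi^2 + (1/18)*(K*pi^2) - (1/6)*(K*(pi * sqrt 3))"
    unfolding A1_def by (simp add: field_simps power2_eq_square)
  have eI: "I = 1/2 - (1/3)*(K*pi^2)" unfolding I_def by simp
  have A1l: "A1 \<ge> 2258/10000 - 3587/10000 * K" unfolding eA using kp2 ks1 pi2_b K by linarith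
  have A1u: "A1 \<le> 2259/10000 - 3585/10000 * K" unfolding eA using kp1 ks2 pi2_b K by linarith
  have Il: "I \<ge> 1/2 - 32899/10000 * K" unfolding eI using kp1 K by linarith
  have Iu: "I \<le> 1/2 - 32896/10000 * K" unfolding eI using kp2 K by linarith
  have R: "K*pi^2/3 \<le> 32899/10000 * K" using kp1 K by linarith
  have A1p: "A1 \<ge> 0" using A1l K by linarith
  have ec: "exp c \<ge> 1 + c + c^2/2" using exp_lower_Taylor_quadratic[of c] c by simp
  have ec2: "exp (c/2) \<ge> 1 + c/2 + c^2/8"
    using exp_lower_Taylor_quadratic[of "c/2"] c by (simp add: power2_eq_square)
  have emc: "exp (-c) * (1 + c + c^2/2) \<le> 1"
  proof -
    have "exp (-c) * (1 + c + c^2/2) \<le> exp (-c) * exp c" using ec by (intro mult_left_mono) auto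
    thus ?thesis by (simp add: exp_minus)
  qed
  show ?thesis
  proof (cases "I - A1 \<ge> 0")
    case True
    have Kb: "K \<le> 93556/1000000" using True A1l Iu by linarith
    define M1 where "M1 = I + (c + c^2/2) * A1"
    have M1: "c * M1 \<ge> 32899/10000 * K"
    proof (cases "c \<le> 888/1000")
      case True
      have f1: "c*K \<le> 1053/10000 * (c*c)" using mult_left_mono[OF K(3), of c] c by (simp add: algebra_simps)
      have f2: "(c*c)*K \<le> 1053/10000 * (c*c*c)" using mult_left_mono[OF K(3), of "c*c"] c by (simp add: algebra_simps)
      have f3: "c*c \<le> 888/1000 * c" using True c by (intro mult_right_mono) auto
      have f4: "c*c*c \<le> 888/1000 * (c*c)" using mult_left_mono[OF True, of "c*c"] c by (simp add: algebra_simps)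
      have g1: "c * I \<ge> 1/2 * c - 32899/10000 * (c*K)"
        using mult_left_mono[OF Il, of c] c by (simp add: algebra_simps)
      have g2: "(c*c) * A1 \<ge> 2258/10000 * (c*c) - 3587/10000 * ((c*c)*K)"
        using mult_left_mono[OF A1l, of "c*c"] by (simp add: algebra_simps)
      have g3: "(c*c*c/2) * A1 \<ge> 0" using c A1p by simp
      have "c * M1 = c * I + (c*c) * A1 + (c*c*c/2) * A1" unfolding M1_def by (simp add: algebra_simps power2_eq_square)
      thus ?thesis using f1 f2 f3 f4 g1 g2 g3 K c by linarith
    next
      case False
      have Il2: "I \<ge> 19221/100000" using Il Kb by linarith
      have A1l2: "A1 \<ge> 19224/100000" using A1l Kb by linarith
      have cc: "c*c \<ge> 788/1000"
      proof -
        have "(888/1000) * (888/1000) \<le> c*c" using False by (intro mult_mono) auto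
        thus ?thesis by simp
      qed
      have g1: "c * I \<ge> 19221/100000 * c" using mult_left_mono[OF Il2, of c] c by (simp add: algebra_simps)
      have g2: "(c*c) * A1 \<ge> 19224/100000 * (c*c)" using mult_left_mono[OF A1l2, of "c*c"] by (simp add: algebra_simps)
      have g3: "(c*c*c/2) * A1 \<ge> 0" using c A1p by simp
      have "c * M1 = c * I + (c*c) * A1 + (c*c*c/2) * A1" unfolding M1_def by (simp add: algebra_simps power2_eq_square)
      thus ?thesis using g1 g2 g3 cc False Kb by linarith
    qed
    have step1: "c * (exp (c/2) * A1 + G * (I - A1)) \<ge> c * (exp (c/2) * A1 + exp (-c/2) * (I - A1))"
      using G True c by (intro mult_left_mono add_left_mono mult_right_mono) auto
    have eq: "exp (c/2) * A1 + exp (-c/2) * (I - A1) = exp (-c/2) * (I + (exp c - 1) * A1)"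
    proof -
      have "exp (-c/2) * exp c = exp (c/2)" by (simp flip: exp_add)
      thus ?thesis by (simp add: algebra_simps)
    qed
    have step2: "I + (exp c - 1) * A1 \<ge> M1"
      unfolding M1_def using ec A1p by (intro add_left_mono mult_right_mono) auto
    have "c * (exp (-c/2) * (I + (exp c - 1) * A1)) \<ge> c * (exp (-c/2) * M1)"
      using step2 c by (intro mult_left_mono) auto
    also have "c * (exp (-c/2) * M1) = exp (-c/2) * (c * M1)" by simp
    also have "\<dots> \<ge> exp (-c/2) * (32899/10000 * K)" using M1 by (intro mult_left_mono) auto
    also have "exp (-c/2) * (32899/10000 * K) \<ge> exp (-c) * (32899/10000 * K)" using K c by (intro mult_right_mono) auto
    also have "exp (-c) * (32899/10000 * K) \<ge> exp (-c) * (K*pi^2/3)" using R by (intro mult_left_mono) auto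
    finally have "c * (exp (-c/2) * (I + (exp c - 1) * A1)) \<ge> K*pi^2*exp(-c)/3" by (simp add: algebra_simps)
    thus ?thesis using step1 unfolding eq by linarith
  next
    case False
    have Kb: "K \<ge> 93504/1000000" using False A1u Il by linarith
    have cb: "c \<ge> 887/1000" using Kb K by linarith
    define M2 where "M2 = I + (c/2 + c^2/8) * A1"
    define Q where "Q = 1 + c + c^2/2"
    have MQ: "M2 * Q \<ge> 346427/1000000 \<and> (c \<ge> 3/2 \<longrightarrow> c * (M2 * Q) \<ge> 52/100)"
    proof -
      have A1l3: "A1 \<ge> 169125/1000000" using A1l K by linarith
      consider "c \<le> 12/10" | "12/10 \<le> c" "c \<le> 135/100" | "135/100 \<le> c" "c \<le> 3/2" | "3/2 \<le> c" by linarith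
      thus ?thesis
      proof cases
        case 1
        have I1: "I \<ge> 8428/100000" using Il K 1 by linarith
        have A1': "A1 \<ge> 18047/100000" using A1l K 1 by linarith
        have co: "c/2 + c^2/8 \<ge> 54184/100000"
        proof -
          have "c*c \<ge> (887/1000)*(887/1000)" using cb by (intro mult_mono) auto
          thus ?thesis using cb by (simp add: power2_eq_square)
        qed
        have "(c/2 + c^2/8) * A1 \<ge> 54184/100000 * (18047/100000)" using co A1' by (intro mult_mono) auto
        hence M: "M2 \<ge> 18206/100000" unfolding M2_def using I1 by linarith
        have Qb: "Q \<ge> 228038/100000"
        proof -
          have "c*c \<ge> (887/1000)*(887/1000)" using cb by (intro mult_mono) auto
          thus ?thesis unfolding Q_def using cb by (simp add: power2_eq_square)
        qed
        have "M2 * Q \<ge> (18206/100000) * (228038/100000)" using M Qb by (intro mult_mono) auto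
        thus ?thesis using 1 by simp
      next
        case 2
        have I1: "I \<ge> 32323/1000000" using Il K 2 by linarith
        have A1': "A1 \<ge> 174808/1000000" using A1l K 2 by linarith
        have co: "c/2 + c^2/8 \<ge> 78/100"
        proof -
          have "c*c \<ge> (12/10)*(12/10)" using 2 by (intro mult_mono) auto
          thus ?thesis using 2 by (simp add: power2_eq_square)
        qed
        have "(c/2 + c^2/8) * A1 \<ge> 78/100 * (174808/1000000)" using co A1' by (intro mult_mono) auto
        hence M: "M2 \<ge> 168672/1000000" unfolding M2_def using I1 by linarith
        have Qb: "Q \<ge> 292/100"
        proof -
          have "c*c \<ge> (12/10)*(12/10)" using 2 by (intro mult_mono) auto
          thus ?thesis unfolding Q_def using 2 by (simp add: power2_eq_square)
        qed
        have "M2 * Q \<ge> (168672/1000000) * (292/100)" using M Qb by (intro mult_mono) auto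
        thus ?thesis using 2 by simp
      next
        case 3
        have I1: "I \<ge> -1965/100000" using Il K 3 by linarith
        have co: "c/2 + c^2/8 \<ge> 902812/1000000"
        proof -
          have "c*c \<ge> (135/100)*(135/100)" using 3 by (intro mult_mono) auto
          thus ?thesis using 3 by (simp add: power2_eq_square)
        qed
        have "(c/2 + c^2/8) * A1 \<ge> 902812/1000000 * (169125/1000000)" using co A1l3 by (intro mult_mono) auto
        hence M: "M2 \<ge> 133037/1000000" unfolding M2_def using I1 by linarith
        have Qb: "Q \<ge> 326125/100000"
        proof -
          have "c*c \<ge> (135/100)*(135/100)" using 3 by (intro mult_mono) auto
          thus ?thesis unfolding Q_def using 3 by (simp add: power2_eq_square)
        qed
        have MQ3: "(133037/1000000) * (326125/100000) \<le> M2 * Q" using M Qb by (intro mult_mono) auto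
        have "c * (M2 * Q) \<ge> (3/2) * ((133037/1000000) * (326125/100000))" if "c \<ge> 3/2"
          by (rule mult_mono[OF that MQ3]) (use c in auto)
        thus ?thesis using MQ3 by auto
      next
        case 4
        have I1: "I \<ge> -19805/1000000" using Il K by linarith
        have co: "c/2 + c^2/8 \<ge> 103125/100000"
        proof -
          have "c*c \<ge> (3/2)*(3/2)" using 4 by (intro mult_mono) auto
          thus ?thesis using 4 by (simp add: power2_eq_square)
        qed
        have "(c/2 + c^2/8) * A1 \<ge> 103125/100000 * (169125/1000000)" using co A1l3 by (intro mult_mono) auto
        hence M: "M2 \<ge> 15460/100000" unfolding M2_def using I1 by linarith
        have Qb: "Q \<ge> 3625/1000"
        proof -
          have "c*c \<ge> (3/2)*(3/2)" using 4 by (intro mult_mono) auto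
          thus ?thesis unfolding Q_def using 4 by (simp add: power2_eq_square)
        qed
        have MQ1: "(15460/100000) * (3625/1000) \<le> M2 * Q" using M Qb by (intro mult_mono) auto
        have "c * (M2 * Q) \<ge> (3/2) * ((15460/100000) * (3625/1000))"
          by (rule mult_mono[OF 4 MQ1]) (use c in auto)
        thus ?thesis using MQ1 by simp
      qed
    qed
    have cMQ: "c * (M2 * Q) \<ge> 32899/10000 * K"
    proof (cases "c \<ge> 3/2")
      case True
      have "c * (M2 * Q) \<ge> 52/100" using MQ True by blast
      thus ?thesis using K by linarith
    next
      case False
      have "c * (M2 * Q) \<ge> c * (346427/1000000)" using MQ c by (intro mult_left_mono) auto
      thus ?thesis using K by linarith
    qed
    have M2p: "M2 \<ge> 0"
    proof -
      have Qp: "Q > 0" unfolding Q_def using c by (simp add: add_pos_nonneg)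
      have "M2 * Q > 0" using MQ by linarith
      thus ?thesis using Qp by (simp add: zero_less_mult_iff)
    qed
    have step1: "c * (exp (c/2) * A1 + G * (I - A1)) \<ge> c * (exp (c/2) * A1 + 1 * (I - A1))"
      using G False c by (intro mult_left_mono add_left_mono mult_right_mono_neg) auto
    have step2: "exp (c/2) * A1 + 1 * (I - A1) \<ge> M2"
    proof -
      have "(exp (c/2) - 1) * A1 \<ge> (c/2 + c^2/8) * A1" using ec2 A1p by (intro mult_right_mono) auto
      thus ?thesis unfolding M2_def by (simp add: algebra_simps)
    qed
    have z1: "c * M2 \<le> c * (exp (c/2) * A1 + 1 * (I - A1))" using step2 c by (intro mult_left_mono) auto
    have z2: "exp (-c) * (c * (M2 * Q)) \<le> c * M2"
    proof -
      have "exp (-c) * Q \<le> 1" using emc unfolding Q_def .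
      hence "(c * M2) * (exp (-c) * Q) \<le> (c * M2) * 1" using c M2p by (intro mult_left_mono) auto
      thus ?thesis by (simp add: algebra_simps)
    qed
    have z3: "exp (-c) * (32899/10000 * K) \<le> exp (-c) * (c * (M2 * Q))" using cMQ by (intro mult_left_mono) auto
    have z4: "exp (-c) * (K*pi^2/3) \<le> exp (-c) * (32899/10000 * K)" using R by (intro mult_left_mono) auto
    have "K*pi^2*exp(-c)/3 = exp (-c) * (K*pi^2/3)" by simp
    also have "\<dots> \<le> c * (exp (c/2) * A1 + 1 * (I - A1))" using z1 z2 z3 z4 by linarith
    finally have "c * (exp (c/2) * A1 + 1 * (I - A1)) \<ge> K*pi^2*exp(-c)/3" .
    thus ?thesis using step1 by linarith
  qed
qed

lemma EA1:
  "Ep 0 ((1-K)*pi/3) (-1/2) (pi/3) - Ep 0 ((1-K)*pi/3) (-1/2) 0 = -(1-K)*pi^2/18 + pi^2/36 - K*pi * sqrt 3/6 + 1/2"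
  unfolding Ep_def by (simp add: cos_60 sin_60 power2_eq_square field_simps)

lemma EA23:
  "(Ep 0 ((1-K)*pi/3) (-1/2) t0 - Ep 0 ((1-K)*pi/3) (-1/2) (pi/3)) + (Ep (pi*t0) (-(pi+t0) - K*pi/3) 1 pi - Ep (pi*t0) (-(pi+t0) - K*pi/3) 1 t0)
   = (1/2 - K*pi^2/3) - (-(1-K)*pi^2/18 + pi^2/36 - K*pi * sqrt 3/6 + 1/2)"
  unfolding Ep_def t0_def by (simp add: cos_60 sin_60 cos_120 sin_120 cos_120' sin_120' power2_eq_square field_simps)

lemma EB:
  "(Ep 0 ((1-K)*pi/9) 0 (pi/3) - Ep 0 ((1-K)*pi/9) 0 0) + (Ep (-(pi^2/18)) (pi/3 + (1-K)*pi/9) (-1/2) t0 - Ep (-(pi^2/18)) (pi/3 + (1-K)*pi/9) (-1/2) (pi/3))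
    + (Ep (pi^2/3) (-((15+2*K)*pi/18)) (1/2) pi - Ep (pi^2/3) (-((15+2*K)*pi/18)) (1/2) t0)
   = 1/2 - K*pi^2/9 - pi/18*(sqrt 3/2 - pi/6)"
  unfolding Ep_def t0_def by (simp add: cos_60 sin_60 cos_120 sin_120 cos_120' sin_120' power2_eq_square field_simps)

lemma JJ_ge: "JJ c \<ge> pi"
proof -
  have I1: "((gg c) has_integral (PP c pi - PP c 0)) {0..pi}"
    by (rule ftc_real) (use pi_gt3 in \<open>auto intro!: PP_deriv\<close>)
  have I2: "((\<lambda>t. 1 + c * cos t) has_integral ((\<lambda>t. t + c * sin t) pi - (\<lambda>t. t + c * sin t) 0)) {0..pi}"
    by (rule ftc_real) (use pi_gt3 in \<open>auto intro!: derivative_eq_intros\<close>)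
  have "(\<lambda>t. t + c * sin t) pi - (\<lambda>t. t + c * sin t) 0 \<le> PP c pi - PP c 0"
    by (rule has_integral_le[OF I2 I1]) (simp add: gg_def)
  thus ?thesis unfolding JJ_def by simp
qed

lemma g0_lem:
  assumes c: "c > 0" and K: "0 \<le> K" "K \<le> 158/1000" "K \<le> 1053/10000 * c"
  shows "gg c t0 \<le> (1-K) * JJ c / pi"
proof -
  have e: "exp (c/2) \<ge> 1 + c/2" using exp_ge_add_one_self[of "c/2"] by simp
  have em: "exp (-c/2) * (1 + c/2) \<le> 1"
  proof -
    have "exp (-c/2) * (1 + c/2) \<le> exp (-c/2) * exp (c/2)" using e by (intro mult_left_mono) auto
    thus ?thesis by (simp flip: exp_add)
  qed
  have k1: "(1-K) * (1 + c/2) \<ge> 1"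
  proof (cases "c \<le> 1")
    case True
    have f: "c*K \<le> 1053/10000 * (c*c)" using mult_left_mono[OF K(3), of c] c by (simp add: algebra_simps)
    have f2: "c*c \<le> c" using True c by (intro mult_left_le_one_le) auto
    have "(1-K) * (1 + c/2) = 1 + c/2 - K - (1/2)*(c*K)" by (simp add: field_simps)
    thus ?thesis using f f2 K by linarith
  next
    case False
    have "(1-K) * (1 + c/2) \<ge> (842/1000) * (3/2)" using K False by (intro mult_mono) auto
    thus ?thesis by simp
  qed
  have "exp (-c/2) \<le> 1 - K"
  proof -
    have "exp (-c/2) * 1 \<le> exp (-c/2) * ((1-K) * (1 + c/2))" using k1 by (intro mult_left_mono) auto
    also have "\<dots> = (1-K) * (exp (-c/2) * (1 + c/2))" by simp
    also have "\<dots> \<le> (1-K) * 1" using em K by (intro mult_left_mono) auto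
    finally show ?thesis by simp
  qed
  also have "1 - K \<le> (1-K) * JJ c / pi"
  proof -
    have "(1-K) * 1 \<le> (1-K) * (JJ c / pi)" using JJ_ge[of c] K pi_gt3 by (intro mult_left_mono) (auto simp: field_simps)
    thus ?thesis by simp
  qed
  finally show ?thesis unfolding gg_t0 .
qed

theorem lemma3p3:
  fixes c \<theta>1 \<theta>2 \<theta>3 :: real
  assumes "c > 0"
    and "\<theta>1 \<ge> 0" and "\<theta>2 \<ge> 0" and "\<theta>3 \<ge> 0"
    and "\<theta>1 + \<theta>2 + \<theta>3 = 2 * pi"
    and "\<theta>1 \<le> pi" and "\<theta>2 \<le> pi" and "\<theta>3 \<le> pi"
  shows "- 3 * F c (2 * pi / 3) + (F c \<theta>1 + F c \<theta>2 + F c \<theta>3)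
         \<le> 0.158 * (- 1 + (1 - 3 powr (4/3) / 5) * exp (- c * pi / 2)
                    + 3 powr (4/3) / 5 * exp (- c * pi / 6))
           * ((\<theta>1 / (2*pi) - 1/3)^2 + (\<theta>2 / (2*pi) - 1/3)^2 + (\<theta>3 / (2*pi) - 1/3)^2)"
proof -
  note c = assms(1)
  define k where "k = 0.158 * (- 1 + (1 - 3 powr (4/3) / 5) * exp (- c * pi / 2) + 3 powr (4/3) / 5 * exp (- c * pi / 6))"
  define K where "K = -k"
  have Kb: "0 \<le> K" "K \<le> 158/1000" "K \<le> 1053/10000 * c" using K_bounds[OF c] unfolding K_def k_def by auto
  define J where "J = JJ c"
  have Jp: "J \<ge> pi" unfolding J_def by (rule JJ_ge)
  have Jpos: "J > 0" using Jp pi_gt3 by linarith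
  define lam where "lam = (1-K) * J / pi"
  have g0: "gg c t0 \<le> lam" unfolding lam_def J_def by (rule g0_lem[OF c Kb])
  define t1 where "t1 = (1-K)*t0"
  have t1b: "pi/2 \<le> t1" "t1 \<le> t0"
  proof -
    have "(3/4) * t0 \<le> (1-K) * t0" using Kb t0_bounds by (intro mult_right_mono) auto
    thus "pi/2 \<le> t1" unfolding t1_def t0_def by simp
    show "t1 \<le> t0" unfolding t1_def using Kb t0_bounds by (simp add: mult_left_le_one_le)
  qed
  have Gb: "exp (-c/2) \<le> gg c t1" "gg c t1 \<le> 1"
  proof -
    show "exp (-c/2) \<le> gg c t1" unfolding gg_t0[symmetric]
      by (rule gg_cos_mono) (use c t1b t0_bounds pi_gt3 in auto)
    show "gg c t1 \<le> 1" unfolding gg_pi2[symmetric, of c]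
      by (rule gg_cos_mono) (use c t1b t0_bounds pi_gt3 in auto)
  qed
  have K4: "K \<le> 1/4" using Kb by linarith
  note MAl = MA_lower[OF c Kb(1) K4, unfolded EA1 EA23]
  note MAs = MA_scalar[OF c Kb Gb]
  have hMq: "2 * Qn c pi - 3 * Qn c t0 \<le> pi/3*(1-K)*J"
    using MAl MAs unfolding t1_def J_def JJ_def by linarith
  have hM: "phi c lam 0 + 2 * phi c lam pi \<le> 0"
  proof -
    have "phi c lam 0 + 2 * phi c lam pi = 2 * Qn c pi - 3 * Qn c t0 - lam * pi^2/3"
      unfolding phi_def Qn0 by (simp add: t0_def field_simps power2_eq_square)
    moreover have "lam * pi^2/3 = pi/3*(1-K)*J" unfolding lam_def using pi_gt3 by (simp add: field_simps power2_eq_square)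
    ultimately show ?thesis using hMq by linarith
  qed
  note MBl = MB_lower[OF c Kb(1) K4, unfolded EB]
  note MBs = MB_scalar[OF c Kb]
  have hBq: "Qn c (pi/3) + Qn c pi - 2 * Qn c t0 \<le> pi/9*(1-K)*J"
    using MBl MBs unfolding J_def JJ_def by linarith
  have hB: "phi c lam (pi/3) + phi c lam pi \<le> 0"
  proof -
    have "phi c lam (pi/3) + phi c lam pi = Qn c (pi/3) + Qn c pi - 2 * Qn c t0 - lam * pi^2/9"
      unfolding phi_def by (simp add: t0_def field_simps power2_eq_square)
    moreover have "lam * pi^2/9 = pi/9*(1-K)*J" unfolding lam_def using pi_gt3 by (simp add: field_simps power2_eq_square)
    ultimately show ?thesis using hBq by linarith
  qed
  have main: "phi c lam \<theta>1 + phi c lam \<theta>2 + phi c lam \<theta>3 \<le> 0"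
    by (rule main_phi2[OF _ g0 hB hM]) (use assms in auto)
  define S where "S = (\<theta>1 - t0)^2 + (\<theta>2 - t0)^2 + (\<theta>3 - t0)^2"
  define X where "X = Qn c \<theta>1 + Qn c \<theta>2 + Qn c \<theta>3 - 3 * Qn c t0"
  have s3: "\<theta>1 + \<theta>2 + \<theta>3 = 3 * t0" using assms(5) unfolding t0_def by simp
  have XS: "X \<le> lam * S / 2"
  proof -
    have "phi c lam \<theta>1 + phi c lam \<theta>2 + phi c lam \<theta>3 = X - (PP c t0 - PP c 0) * (\<theta>1 + \<theta>2 + \<theta>3 - 3*t0) - lam * S / 2"
      unfolding phi_def X_def S_def by (simp add: algebra_simps)
    thus ?thesis using main s3 by simp
  qed
  have F1: "F c \<theta>1 = Qn c \<theta>1 / (2*pi*J) - (\<theta>1/(2*pi))^2" unfolding J_def by (rule F_eq) (use assms pi_less_4 in auto)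
  have F2: "F c \<theta>2 = Qn c \<theta>2 / (2*pi*J) - (\<theta>2/(2*pi))^2" unfolding J_def by (rule F_eq) (use assms pi_less_4 in auto)
  have F3: "F c \<theta>3 = Qn c \<theta>3 / (2*pi*J) - (\<theta>3/(2*pi))^2" unfolding J_def by (rule F_eq) (use assms pi_less_4 in auto)
  have F0: "F c (2*pi/3) = Qn c t0 / (2*pi*J) - (t0/(2*pi))^2" unfolding J_def t0_def by (rule F_eq) (use pi_gt3 pi_less_4 in auto)
  have q1: "(\<theta>1 / (2*pi) - 1/3)^2 + (\<theta>2 / (2*pi) - 1/3)^2 + (\<theta>3 / (2*pi) - 1/3)^2 = S / (4*pi^2)"
    unfolding S_def t0_def using pi_gt3 by (simp add: field_simps power2_eq_square)
  have Sx: "S = \<theta>1^2 + \<theta>2^2 + \<theta>3^2 - 3*t0^2"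
  proof -
    have "S = \<theta>1^2 + \<theta>2^2 + \<theta>3^2 - 2*t0*(\<theta>1 + \<theta>2 + \<theta>3) + 3*t0^2"
      unfolding S_def by (simp add: power2_eq_square algebra_simps)
    thus ?thesis unfolding s3 by (simp add: power2_eq_square)
  qed
  have q2: "(\<theta>1/(2*pi))^2 + (\<theta>2/(2*pi))^2 + (\<theta>3/(2*pi))^2 - 3*(t0/(2*pi))^2 = S / (4*pi^2)"
    unfolding Sx using pi_gt3 by (simp add: field_simps power2_eq_square)
  have LHS: "- 3 * F c (2 * pi / 3) + (F c \<theta>1 + F c \<theta>2 + F c \<theta>3) = X / (2*pi*J) - S / (4*pi^2)"
  proof -
    have "- 3 * F c (2 * pi / 3) + (F c \<theta>1 + F c \<theta>2 + F c \<theta>3)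
        = X / (2*pi*J) - ((\<theta>1/(2*pi))^2 + (\<theta>2/(2*pi))^2 + (\<theta>3/(2*pi))^2 - 3*(t0/(2*pi))^2)"
      unfolding F0 F1 F2 F3 X_def by (simp add: diff_divide_distrib add_divide_distrib)
    thus ?thesis unfolding q2 .
  qed
  have q3: "X / (2*pi*J) \<le> (1-K) * S / (4*pi^2)"
  proof -
    have pJ: "2*pi*J > 0" using Jpos pi_gt3 by simp
    have "X / (2*pi*J) \<le> (lam * S / 2) / (2*pi*J)" using XS pJ by (intro divide_right_mono) auto
    also have "\<dots> = (1-K) * S / (4*pi^2)" unfolding lam_def using Jpos pi_gt3 by (simp add: field_simps power2_eq_square)
    finally show ?thesis .
  qed
  have "- 3 * F c (2 * pi / 3) + (F c \<theta>1 + F c \<theta>2 + F c \<theta>3) \<le> (1-K) * S / (4*pi^2) - S / (4*pi^2)"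
    unfolding LHS using q3 by linarith
  also have "\<dots> = k * (S / (4*pi^2))" unfolding K_def by (simp add: field_simps)
  also have "\<dots> = k * ((\<theta>1 / (2*pi) - 1/3)^2 + (\<theta>2 / (2*pi) - 1/3)^2 + (\<theta>3 / (2*pi) - 1/3)^2)" unfolding q1 ..
  finally show ?thesis unfolding k_def .
qed

end
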